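(* In the setting below, for $\varphi\in C_b(\mathbb R^d)$, $t\ge0$, $x\in\mathbb R^d$ put $(P_t\varphi)(x):=V(t,x;\varphi):=\sup_{\alpha\in\mathcal A}\mathbb E\big(\varphi(X^\alpha(t,x))-\int_0^tg(\alpha(s))ds\big)$. Then each $P_t$ maps $C_b(\mathbb R^d)$ into itself with $\|P_t\varphi\|_\infty\le\|\varphi\|_\infty$; $P_t\varphi\to\varphi$ uniformly on compact subsets of $\mathbb R^d$ as $t\to0$ for every $\varphi\in C_b(\mathbb R^d)$; and for all $R,T,c\ge0$ and $\varepsilon>0$ there is $r>0$ such that for all $\varphi_1,\varphi_2\in C_b(\mathbb R^d)$ with $\|\varphi_i\|_\infty\le R$ and $\sup_{|y|\le r}|\varphi_1(y)-\varphi_2(y)|<\varepsilon/3$ one has $\sup_{t\in[0,T]}\sup_{|x|\le c}|V(t,x;\varphi_1)-V(t,x;\varphi_2)|<\varepsilon$.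
   Context: $W$ is a $d$-dimensional Brownian motion on a complete filtered probability space satisfying the usual conditions, $\sigma>0$. $A\subset\mathbb R^m$ is nonempty with $0\in A$; admissible controls $\mathcal A$ are progressively measurable $\alpha\colon\Omega\times[0,\infty)\to A$ with $\mathbb E\int_0^t|\alpha(s)|ds<\infty$ for all $t$. $b\colon\mathbb R^d\times A\to\mathbb R^d$ is measurable with $b(x,0)=0$, $|b(x_1,a)-b(x_2,a)|\le C|x_1-x_2|$ and $|b(x,a)|\le C(1+|x|+|a|)$ for a constant $C\ge0$. $X^\alpha(t,x)$ is the unique strong solution of $dX=b(X,\alpha(t))dt+\sigma dW$, $X(0)=x$. The running cost $g\colon A\to[0,\infty)$ satisfies $g(0)=0$ and $\bar g^*(y):=\sup_{a\in A}(|a|y-g(a))<\infty$ for all $y\ge0$. $C_b(\mathbb R^d)$ is the space of bounded continuous functions with sup norm $\|\cdot\|_\infty$. *)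

theory Defs
  imports "HOL-Probability.Probability"
begin

text \<open>Usual conditions for a filtration F (indexed by t \<ge> 0) on a probability space M:
  each F t is a sub-sigma-algebra of M, F is increasing, F 0 contains all M-null sets,
  and F is right-continuous.  (Completeness of M is stated separately via complete_measure.)\<close>
definition usual_filtration :: "'a measure \<Rightarrow> (real \<Rightarrow> 'a measure) \<Rightarrow> bool" where
  "usual_filtration M F \<longleftrightarrow>
     (\<forall>t\<ge>0. space (F t) = space M \<and> sets (F t) \<subseteq> sets M) \<and>
     (\<forall>s t. 0 \<le> s \<longrightarrow> s \<le> t \<longrightarrow> sets (F s) \<subseteq> sets (F t)) \<and>
     (\<forall>N\<in>null_sets M. N \<in> sets (F 0)) \<and>
     (\<forall>t\<ge>0. sets (F t) = (\<Inter>u\<in>{t<..}. sets (F u)))"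

definition gauss_density :: "real \<Rightarrow> real^'d \<Rightarrow> real" where
  "gauss_density h y = (2 * pi * h) powr (- real CARD('d) / 2) * exp (- (norm y)\<^sup>2 / (2 * h))"

text \<open>W is a d-dimensional (F_t)-Brownian motion: W 0 = 0, continuous paths, adapted,
  and for 0 \<le> s < t the increment W t - W s is independent of F s with law N(0,(t-s) I).\<close>
definition brownian_motion :: "'a measure \<Rightarrow> (real \<Rightarrow> 'a measure) \<Rightarrow> (real \<Rightarrow> 'a \<Rightarrow> real^'d) \<Rightarrow> bool" where
  "brownian_motion M F W \<longleftrightarrow>
     (\<forall>\<omega>\<in>space M. W 0 \<omega> = 0 \<and> continuous_on {0..} (\<lambda>t. W t \<omega>)) \<and>
     (\<forall>t\<ge>0. W t \<in> borel_measurable (F t)) \<and>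
     (\<forall>s t. 0 \<le> s \<longrightarrow> s < t \<longrightarrow>
        (\<forall>B\<in>sets (F s). \<forall>C\<in>sets borel.
           measure M (B \<inter> {\<omega>\<in>space M. W t \<omega> - W s \<omega> \<in> C})
             = measure M B * measure (density lborel (\<lambda>y. ennreal (gauss_density (t - s) y))) C))"

definition progressive :: "'a measure \<Rightarrow> (real \<Rightarrow> 'a measure) \<Rightarrow> ('a \<Rightarrow> real \<Rightarrow> 'b::topological_space) \<Rightarrow> bool" where
  "progressive M F \<alpha> \<longleftrightarrow>
     (\<forall>t\<ge>0. (\<lambda>(\<omega>, s). \<alpha> \<omega> s) \<in> borel_measurable (F t \<Otimes>\<^sub>M restrict_space borel {0..t}))"

definition admissible :: "'a measure \<Rightarrow> (real \<Rightarrow> 'a measure) \<Rightarrow> (real^'m) set \<Rightarrow> ('a \<Rightarrow> real \<Rightarrow> real^'m) \<Rightarrow> bool" where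
  "admissible M F A \<alpha> \<longleftrightarrow>
     progressive M F \<alpha> \<and>
     (\<forall>\<omega>\<in>space M. \<forall>s\<ge>0. \<alpha> \<omega> s \<in> A) \<and>
     (\<forall>t\<ge>0. (\<integral>\<^sup>+\<omega>. (\<integral>\<^sup>+s. ennreal (norm (\<alpha> \<omega> s)) * indicator {0..t} s \<partial>lborel) \<partial>M) < \<infinity>)"

definition strong_solution :: "'a measure \<Rightarrow> (real \<Rightarrow> 'a measure) \<Rightarrow> (real \<Rightarrow> 'a \<Rightarrow> real^'d) \<Rightarrow>
    (real^'d \<Rightarrow> real^'m \<Rightarrow> real^'d) \<Rightarrow> real \<Rightarrow> ('a \<Rightarrow> real \<Rightarrow> real^'m) \<Rightarrow> real^'d \<Rightarrow>
    (real \<Rightarrow> 'a \<Rightarrow> real^'d) \<Rightarrow> bool" where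
  "strong_solution M F W b \<sigma> \<alpha> x X \<longleftrightarrow>
     (\<forall>t\<ge>0. X t \<in> borel_measurable (F t)) \<and>
     (AE \<omega> in M. continuous_on {0..} (\<lambda>t. X t \<omega>) \<and>
        (\<forall>t\<ge>0. set_integrable lborel {0..t} (\<lambda>s. b (X s \<omega>) (\<alpha> \<omega> s)) \<and>
                X t \<omega> = x + (\<integral>s\<in>{0..t}. b (X s \<omega>) (\<alpha> \<omega> s) \<partial>lborel) + \<sigma> *\<^sub>R W t \<omega>))"

text \<open>Expected payoff E( \<phi>(X t) - \<integral>_0^t g(\<alpha> s) ds ), computed in the extended reals
  (the cost term is nonnegative and may have infinite expectation).\<close>
definition payoff :: "'a measure \<Rightarrow> (real^'m \<Rightarrow> real) \<Rightarrow> (real^'d \<Rightarrow> real) \<Rightarrow>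
    (real \<Rightarrow> 'a \<Rightarrow> real^'d) \<Rightarrow> ('a \<Rightarrow> real \<Rightarrow> real^'m) \<Rightarrow> real \<Rightarrow> ereal" where
  "payoff M g \<phi> X \<alpha> t =
     ereal (\<integral>\<omega>. \<phi> (X t \<omega>) \<partial>M)
     - enn2ereal (\<integral>\<^sup>+\<omega>. (\<integral>\<^sup>+s. ennreal (g (\<alpha> \<omega> s)) * indicator {0..t} s \<partial>lborel) \<partial>M)"

text \<open>Value function V(t,x;\<phi>) = sup over admissible \<alpha> of the payoff, where Xs \<alpha> x is X^\<alpha>(.,x).\<close>
definition value_fn :: "'a measure \<Rightarrow> (real \<Rightarrow> 'a measure) \<Rightarrow> (real^'m) set \<Rightarrow> (real^'m \<Rightarrow> real) \<Rightarrow>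
    (('a \<Rightarrow> real \<Rightarrow> real^'m) \<Rightarrow> real^'d \<Rightarrow> real \<Rightarrow> 'a \<Rightarrow> real^'d) \<Rightarrow>
    real \<Rightarrow> real^'d \<Rightarrow> (real^'d \<Rightarrow> real) \<Rightarrow> ereal" where
  "value_fn M F A g Xs t x \<phi> = (SUP \<alpha>\<in>{\<alpha>. admissible M F A \<alpha>}. payoff M g \<phi> (Xs \<alpha> x) \<alpha> t)"

definition sup_norm :: "('b \<Rightarrow> real) \<Rightarrow> real" where
  "sup_norm \<phi> = (SUP y. \<bar>\<phi> y\<bar>)"

end

theory Submission
  imports Defs
begin


lemma gronwall:
  fixes u k :: "real \<Rightarrow> real" and C t :: real
  assumes t: "t \<ge> 0" and C: "C \<ge> 0"
    and cu: "continuous_on {0..t} u" and ck: "continuous_on {0..t} k"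
    and k0: "\<And>s. s \<in> {0..t} \<Longrightarrow> k s \<ge> 0"
    and ineq: "\<And>s. s \<in> {0..t} \<Longrightarrow> u s \<le> k s + C * integral {0..s} u"
  shows "integral {0..t} u \<le> exp (C * t) * integral {0..t} k"
proof -
  define U where "U s = integral {0..s} u" for s
  define K where "K s = integral {0..s} (\<lambda>r. exp (- C * r) * k r)" for s
  define G where "G s = exp (- C * s) * U s - K s" for s
  have cek: "continuous_on {0..t} (\<lambda>r. exp (- C * r) * k r)"
    by (intro continuous_intros ck)
  have cU: "continuous_on {0..t} U"
    unfolding U_def by (rule indefinite_integral_continuous_1) (rule integrable_continuous_real[OF cu])
  have cK: "continuous_on {0..t} K"
    unfolding K_def by (rule indefinite_integral_continuous_1) (rule integrable_continuous_real[OF cek])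
  have cG: "continuous_on {0..t} G"
    unfolding G_def by (intro continuous_intros cU cK)
  have dG: "\<exists>y. DERIV G s :> y \<and> y \<le> 0" if s: "0 < s" "s < t" for s
  proof -
    have sin: "s \<in> {0..t}" using s by auto
    have atw: "at s within {0..t} = at s"
      by (rule at_within_interior) (use s in auto)
    have dU: "(U has_real_derivative u s) (at s)"
      using integral_has_vector_derivative[OF cu sin] unfolding U_def atw
      by (simp add: has_real_derivative_iff_has_vector_derivative)
    have dK: "(K has_real_derivative (exp (- C * s) * k s)) (at s)"
      using integral_has_vector_derivative[OF cek sin] unfolding K_def atw
      by (simp add: has_real_derivative_iff_has_vector_derivative)
    have de: "((\<lambda>s. exp (- C * s)) has_real_derivative (exp (- C * s) * (- C))) (at s)"
      by (auto intro!: derivative_eq_intros)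
    have "DERIV G s :> (exp (- C * s) * (- C) * U s + exp (- C * s) * u s - exp (- C * s) * k s)"
      using DERIV_diff[OF DERIV_mult[OF de dU] dK] unfolding G_def[abs_def] by (simp add: mult.commute)
    moreover have "exp (- C * s) * (- C) * U s + exp (- C * s) * u s - exp (- C * s) * k s
        = exp (- C * s) * (u s - k s - C * U s)" by (simp add: algebra_simps)
    moreover have "u s - k s - C * U s \<le> 0" using ineq[OF sin] unfolding U_def by simp
    ultimately show ?thesis
      by (intro exI[of _ "exp (- C * s) * (u s - k s - C * U s)"]) (simp add: mult_nonneg_nonpos)
  qed
  have "G t \<le> G 0" by (rule DERIV_nonpos_imp_decreasing_open[OF t dG cG]) auto
  moreover have "G 0 = 0" unfolding G_def U_def K_def by simp
  ultimately have "exp (- C * t) * U t \<le> K t" unfolding G_def by simp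
  then have "U t \<le> exp (C * t) * K t"
    by (simp add: exp_minus field_simps)
  also have "K t \<le> integral {0..t} k"
    unfolding K_def
  proof (rule integral_le)
    show "(\<lambda>r. exp (- C * r) * k r) integrable_on {0..t}" by (rule integrable_continuous_real[OF cek])
    show "k integrable_on {0..t}" by (rule integrable_continuous_real[OF ck])
    fix r assume r: "r \<in> {0..t}"
    have "exp (- C * r) \<le> 1" using r C by (simp add: mult_nonneg_nonneg)
    then show "exp (- C * r) * k r \<le> k r" using k0[OF r] by (simp add: mult_left_le_one_le)
  qed
  finally show ?thesis unfolding U_def by simp
qed


lemma det_I:
  fixes X :: "real \<Rightarrow> 'a::euclidean_space" and al :: "real \<Rightarrow> 'b::real_normed_vector"
    and bb :: "real \<Rightarrow> 'c::euclidean_space"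
  assumes t: "t \<ge> 0" and C: "C \<ge> 0" and s: "s \<in> {0..t}"
    and cX: "continuous_on {0..t} X"
    and bint: "bb integrable_on {0..s}"
    and growth: "\<And>r. r \<in> {0..t} \<Longrightarrow> norm (bb r) \<le> C * (1 + norm (X r) + norm (al r))"
    and alint: "(\<lambda>r. norm (al r)) integrable_on {0..t}"
  shows "norm (integral {0..s} bb) \<le> C * s + C * integral {0..s} (\<lambda>r. norm (X r)) + C * integral {0..t} (\<lambda>r. norm (al r))"
proof -
  have sub: "{0..s} \<subseteq> {0..t}" using s by auto
  have iX: "(\<lambda>r. norm (X r)) integrable_on {0..s}"
    by (rule integrable_continuous_real) (intro continuous_intros continuous_on_subset[OF cX sub])
  have ial: "(\<lambda>r. norm (al r)) integrable_on {0..s}"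
    by (rule integrable_on_subinterval[OF alint sub])
  have cm: "(\<lambda>x. C * f x) integrable_on {0..s}" if "f integrable_on {0..s}" for f :: "real \<Rightarrow> real"
    using integrable_on_cmult_left[OF that, of C] by simp
  have ih: "(\<lambda>r. C + C * norm (X r) + C * norm (al r)) integrable_on {0..s}"
    by (intro integrable_add integrable_const_ivl cm iX ial)
  have "norm (integral {0..s} bb) \<le> integral {0..s} (\<lambda>r. C + C * norm (X r) + C * norm (al r))"
    by (rule integral_norm_bound_integral[OF bint ih]) (use growth sub in \<open>force simp: algebra_simps\<close>)
  also have "\<dots> = C * s + C * integral {0..s} (\<lambda>r. norm (X r)) + C * integral {0..s} (\<lambda>r. norm (al r))"
  proof -
    have "integral {0..s} (\<lambda>r. C + C * norm (X r) + C * norm (al r))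
        = integral {0..s} (\<lambda>r. C + C * norm (X r)) + integral {0..s} (\<lambda>r. C * norm (al r))"
      by (rule integral_add) (intro integrable_add integrable_const_ivl cm iX ial)+
    also have "integral {0..s} (\<lambda>r. C + C * norm (X r)) = integral {0..s} (\<lambda>r. C) + integral {0..s} (\<lambda>r. C * norm (X r))"
      by (rule integral_add) (intro integrable_const_ivl cm iX)+
    finally show ?thesis using s by simp
  qed
  also have "integral {0..s} (\<lambda>r. norm (al r)) \<le> integral {0..t} (\<lambda>r. norm (al r))"
    by (rule integral_subset_le[OF sub ial alint]) simp
  finally show ?thesis using C by (simp add: mult_left_mono)
qed

lemma det_path:
  fixes X w :: "real \<Rightarrow> 'a::euclidean_space" and al :: "real \<Rightarrow> 'b::real_normed_vector"
    and bb :: "real \<Rightarrow> 'a"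
  assumes t: "t \<ge> 0" and C: "C \<ge> 0" and sg: "\<sigma> \<ge> 0"
    and cX: "continuous_on {0..t} X" and cw: "continuous_on {0..t} w"
    and bint: "\<And>s. s \<in> {0..t} \<Longrightarrow> bb integrable_on {0..s}"
    and eq: "\<And>s. s \<in> {0..t} \<Longrightarrow> X s = x + integral {0..s} bb + \<sigma> *\<^sub>R w s"
    and growth: "\<And>r. r \<in> {0..t} \<Longrightarrow> norm (bb r) \<le> C * (1 + norm (X r) + norm (al r))"
    and alint: "(\<lambda>r. norm (al r)) integrable_on {0..t}"
  shows "norm (X t - x) \<le> \<sigma> * norm (w t) + C * t + C * integral {0..t} (\<lambda>r. norm (al r))
     + C * (exp (C * t) * (t * (norm x + C * t + C * integral {0..t} (\<lambda>r. norm (al r)))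
          + \<sigma> * integral {0..t} (\<lambda>r. norm (w r))))"
proof -
  define Aa where "Aa = integral {0..t} (\<lambda>r. norm (al r))"
  define k where "k s = norm x + C * t + C * Aa + \<sigma> * norm (w s)" for s
  have Aa0: "Aa \<ge> 0" unfolding Aa_def by (rule integral_nonneg[OF alint]) simp
  have tt: "t \<in> {0..t}" using t by simp
  have iI: "norm (integral {0..s} bb) \<le> C * s + C * integral {0..s} (\<lambda>r. norm (X r)) + C * Aa" if s: "s \<in> {0..t}" for s
    unfolding Aa_def by (rule det_I[OF t C s cX bint[OF s] growth alint])
  have ineq: "norm (X s) \<le> k s + C * integral {0..s} (\<lambda>r. norm (X r))" if s: "s \<in> {0..t}" for s
  proof -
    have "norm (X s) \<le> norm x + norm (integral {0..s} bb) + norm (\<sigma> *\<^sub>R w s)"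
      unfolding eq[OF s] by (rule order_trans[OF norm_triangle_ineq add_right_mono[OF norm_triangle_ineq]])
    also have "norm (\<sigma> *\<^sub>R w s) = \<sigma> * norm (w s)" using sg by simp
    also have "C * s \<le> C * t" using s C by (simp add: mult_left_mono)
    then have "norm (integral {0..s} bb) \<le> C * t + C * integral {0..s} (\<lambda>r. norm (X r)) + C * Aa"
      using iI[OF s] by linarith
    finally show ?thesis unfolding k_def by linarith
  qed
  have ck: "continuous_on {0..t} k" unfolding k_def by (intro continuous_intros cw)
  have cu: "continuous_on {0..t} (\<lambda>r. norm (X r))" by (intro continuous_intros cX)
  have gr: "integral {0..t} (\<lambda>r. norm (X r)) \<le> exp (C * t) * integral {0..t} k"
    by (rule gronwall[OF t C cu ck _ ineq]) (use C Aa0 sg in \<open>auto simp: k_def\<close>)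
  have iw: "(\<lambda>r. norm (w r)) integrable_on {0..t}"
    by (rule integrable_continuous_real) (intro continuous_intros cw)
  have ik: "integral {0..t} k = t * (norm x + C * t + C * Aa) + \<sigma> * integral {0..t} (\<lambda>r. norm (w r))"
  proof -
    have "integral {0..t} k = integral {0..t} (\<lambda>s. norm x + C * t + C * Aa) + integral {0..t} (\<lambda>s. \<sigma> * norm (w s))"
      unfolding k_def by (rule integral_add) (use iw integrable_on_cmult_left[OF iw, of \<sigma>] in auto)
    then show ?thesis using t by simp
  qed
  have "norm (X t - x) = norm (integral {0..t} bb + \<sigma> *\<^sub>R w t)" using eq[OF tt] by simp
  also have "\<dots> \<le> norm (integral {0..t} bb) + \<sigma> * norm (w t)"
    using norm_triangle_ineq[of "integral {0..t} bb" "\<sigma> *\<^sub>R w t"] sg by simp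
  also have "\<dots> \<le> C * t + C * integral {0..t} (\<lambda>r. norm (X r)) + C * Aa + \<sigma> * norm (w t)"
    using iI[OF tt] by simp
  also have "C * integral {0..t} (\<lambda>r. norm (X r)) \<le> C * (exp (C * t) * integral {0..t} k)"
    by (rule mult_left_mono[OF gr C])
  finally show ?thesis unfolding ik Aa_def by simp
qed

lemma det_lip:
  fixes X1 X2 w bb1 bb2 :: "real \<Rightarrow> 'a::euclidean_space"
  assumes t: "t \<ge> 0" and C: "C \<ge> 0"
    and c1: "continuous_on {0..t} X1" and c2: "continuous_on {0..t} X2"
    and i1: "\<And>s. s \<in> {0..t} \<Longrightarrow> bb1 integrable_on {0..s}"
    and i2: "\<And>s. s \<in> {0..t} \<Longrightarrow> bb2 integrable_on {0..s}"
    and eq1: "\<And>s. s \<in> {0..t} \<Longrightarrow> X1 s = x1 + integral {0..s} bb1 + \<sigma> *\<^sub>R w s"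
    and eq2: "\<And>s. s \<in> {0..t} \<Longrightarrow> X2 s = x2 + integral {0..s} bb2 + \<sigma> *\<^sub>R w s"
    and lip: "\<And>r. r \<in> {0..t} \<Longrightarrow> norm (bb1 r - bb2 r) \<le> C * norm (X1 r - X2 r)"
  shows "norm (X1 t - X2 t) \<le> norm (x1 - x2) * (1 + C * t * exp (C * t))"
proof -
  define v where "v r = norm (X1 r - X2 r)" for r
  have cv: "continuous_on {0..t} v" unfolding v_def by (intro continuous_intros c1 c2)
  have iv: "(\<lambda>r. C * v r) integrable_on {0..s}" if s: "s \<in> {0..t}" for s
  proof -
    have "v integrable_on {0..s}"
      by (rule integrable_continuous_real) (rule continuous_on_subset[OF cv], use s in auto)
    from integrable_on_cmult_left[OF this, of C] show ?thesis by simp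
  qed
  have ineq: "v s \<le> norm (x1 - x2) + C * integral {0..s} v" if s: "s \<in> {0..t}" for s
  proof -
    have "X1 s - X2 s = (x1 - x2) + integral {0..s} (\<lambda>r. bb1 r - bb2 r)"
      using eq1[OF s] eq2[OF s] integral_diff[OF i1[OF s] i2[OF s]] by (simp add: algebra_simps)
    then have "v s \<le> norm (x1 - x2) + norm (integral {0..s} (\<lambda>r. bb1 r - bb2 r))"
      unfolding v_def by (simp add: norm_triangle_ineq)
    also have "norm (integral {0..s} (\<lambda>r. bb1 r - bb2 r)) \<le> integral {0..s} (\<lambda>r. C * v r)"
      by (rule integral_norm_bound_integral[OF integrable_diff[OF i1[OF s] i2[OF s]] iv[OF s]])
         (use lip s in \<open>auto simp: v_def\<close>)
    finally show ?thesis by simp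
  qed
  have gr: "integral {0..t} v \<le> exp (C * t) * integral {0..t} (\<lambda>r. norm (x1 - x2))"
    by (rule gronwall[OF t C cv _ _ ineq]) auto
  have tt: "t \<in> {0..t}" using t by simp
  have "v t \<le> norm (x1 - x2) + C * (exp (C * t) * (t * norm (x1 - x2)))"
    using ineq[OF tt] mult_left_mono[OF gr C] t by simp
  then show ?thesis unfolding v_def by (simp add: algebra_simps)
qed


lemma nn_fin:
  fixes f :: "real \<Rightarrow> real"
  assumes m: "(\<lambda>s. indicator {0..t} s *\<^sub>R f s) \<in> borel_measurable lborel"
    and f0: "\<And>s. f s \<ge> 0"
    and fin: "(\<integral>\<^sup>+s. ennreal (f s) * indicator {0..t} s \<partial>lborel) < \<infinity>"
  shows "f integrable_on {0..t}" "(\<integral>\<^sup>+s. ennreal (f s) * indicator {0..t} s \<partial>lborel) = ennreal (integral {0..t} f)"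
proof -
  have eq: "(\<integral>\<^sup>+s. ennreal (norm (indicator {0..t} s *\<^sub>R f s)) \<partial>lborel) = (\<integral>\<^sup>+s. ennreal (f s) * indicator {0..t} s \<partial>lborel)"
    by (intro nn_integral_cong) (auto simp: f0 split: split_indicator)
  have "integrable lborel (\<lambda>s. indicator {0..t} s *\<^sub>R f s)"
    by (rule integrableI_bounded[OF m]) (use eq fin in simp)
  then have si: "set_integrable lborel {0..t} f" unfolding set_integrable_def .
  show "f integrable_on {0..t}" by (rule set_borel_integral_eq_integral(1)[OF si])
  have eq2: "(\<integral>\<^sup>+s. ennreal (f s) * indicator {0..t} s \<partial>lborel) = (\<integral>\<^sup>+s. ennreal (indicator {0..t} s *\<^sub>R f s) \<partial>lborel)"
    by (intro nn_integral_cong) (auto split: split_indicator)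
  also have "\<dots> = ennreal (integral\<^sup>L lborel (\<lambda>s. indicator {0..t} s *\<^sub>R f s))"
    by (rule nn_integral_eq_integral) (use \<open>integrable lborel (\<lambda>s. indicator {0..t} s *\<^sub>R f s)\<close> f0 in auto)
  also have "integral\<^sup>L lborel (\<lambda>s. indicator {0..t} s *\<^sub>R f s) = integral {0..t} f"
    using set_borel_integral_eq_integral(2)[OF si] unfolding set_lebesgue_integral_def .
  finally show "(\<integral>\<^sup>+s. ennreal (f s) * indicator {0..t} s \<partial>lborel) = ennreal (integral {0..t} f)" .
qed

lemma nn_cont:
  fixes f :: "real \<Rightarrow> real"
  assumes c: "continuous_on {0..t} f" and f0: "\<And>s. f s \<ge> 0"
  shows "(\<integral>\<^sup>+s. ennreal (f s) * indicator {0..t} s \<partial>lborel) = ennreal (integral {0..t} f)"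
proof -
  have si: "set_integrable lborel {0..t} f" by (rule borel_integrable_atLeastAtMost'[OF c])
  then have m: "(\<lambda>s. indicator {0..t} s *\<^sub>R f s) \<in> borel_measurable lborel"
    unfolding set_integrable_def by auto
  have "(\<integral>\<^sup>+s. ennreal (f s) * indicator {0..t} s \<partial>lborel) = (\<integral>\<^sup>+s. ennreal (norm (indicator {0..t} s *\<^sub>R f s)) \<partial>lborel)"
    by (intro nn_integral_cong) (auto simp: f0 split: split_indicator)
  also have "\<dots> < \<infinity>" using si unfolding set_integrable_def by (simp add: integrable_iff_bounded)
  finally show ?thesis using nn_fin(2)[OF m f0] by simp
qed


lemma q_le_exp: "(q::real) \<le> exp (q\<^sup>2)"
proof -
  have "1 + q\<^sup>2 \<le> exp (q\<^sup>2)" by (rule exp_ge_add_one_self)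
  moreover have "q \<le> 1 + q\<^sup>2"
  proof (cases "q \<le> 1")
    case True then show ?thesis by (smt (verit) zero_le_power2)
  next
    case False
    then have "q * 1 \<le> q * q" by (intro mult_left_mono) auto
    then show ?thesis by (simp add: power2_eq_square)
  qed
  ultimately show ?thesis by linarith
qed

lemma r_exp_bound:
  fixes r s :: real assumes s: "s > 0"
  shows "r * exp (- r\<^sup>2 / (4 * s)) \<le> 2 * sqrt s"
proof -
  define q where "q = r / (2 * sqrt s)"
  have sq: "sqrt s > 0" using s by simp
  have r: "r = 2 * sqrt s * q" using sq unfolding q_def by simp
  have "r\<^sup>2 / (4 * s) = q\<^sup>2" using s sq unfolding r by (simp add: power2_eq_square field_simps)
  then have "r * exp (- r\<^sup>2 / (4 * s)) = 2 * sqrt s * (q * exp (- q\<^sup>2))"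
    by (simp add: r)
  also have "q * exp (- q\<^sup>2) \<le> 1"
    using q_le_exp[of q] by (simp add: exp_minus field_simps)
  finally show ?thesis using sq by (simp add: mult_left_le)
qed

lemma gauss_bound:
  fixes y :: "real^'d::finite" and s :: real
  assumes s: "s > 0"
  shows "gauss_density s y * norm y \<le> (2 * 2 powr (real CARD('d) / 2) * sqrt s) * gauss_density (2 * s) y"
proof -
  define e where "e = - real CARD('d) / 2"
  define r where "r = norm y"
  have p: "(2 * pi * s) powr e = 2 powr (- e) * (2 * pi * (2 * s)) powr e"
  proof -
    have "(2 * pi * (2 * s)) powr e = 2 powr e * (2 * pi * s) powr e"
      using s by (simp add: powr_mult[symmetric] mult_ac)
    then show ?thesis by (simp add: powr_minus field_simps)
  qed
  have ex: "exp (- r\<^sup>2 / (2 * s)) = exp (- r\<^sup>2 / (4 * s)) * exp (- r\<^sup>2 / (4 * s))"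
    by (simp add: exp_add[symmetric] field_simps)
  have "gauss_density s y * norm y = 2 powr (- e) * (2 * pi * (2 * s)) powr e * exp (- r\<^sup>2 / (4 * s)) * (r * exp (- r\<^sup>2 / (4 * s)))"
    unfolding gauss_density_def e_def[symmetric] r_def[symmetric] p ex by (simp add: mult_ac)
  also have "\<dots> \<le> 2 powr (- e) * (2 * pi * (2 * s)) powr e * exp (- r\<^sup>2 / (4 * s)) * (2 * sqrt s)"
    by (rule mult_left_mono[OF r_exp_bound[OF s]]) simp
  also have "\<dots> = (2 * 2 powr (real CARD('d) / 2) * sqrt s) * gauss_density (2 * s) y"
    unfolding gauss_density_def e_def r_def by (simp add: mult_ac)
  finally show ?thesis .
qed

locale setting =
  fixes M :: "'a measure" and F :: "real \<Rightarrow> 'a measure"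
    and W :: "real \<Rightarrow> 'a \<Rightarrow> real^'d::finite"
    and \<sigma> :: real and A :: "(real^'m::finite) set" and C :: real
    and b :: "real^'d \<Rightarrow> real^'m \<Rightarrow> real^'d"
    and g :: "real^'m \<Rightarrow> real"
    and Xs :: "('a \<Rightarrow> real \<Rightarrow> real^'m) \<Rightarrow> real^'d \<Rightarrow> real \<Rightarrow> 'a \<Rightarrow> real^'d"
  assumes prob: "prob_space M" and compl: "complete_measure M"
    and usual: "usual_filtration M F"
    and BM: "brownian_motion M F W"
    and sigma_pos: "\<sigma> > 0"
    and A_ne: "A \<noteq> {}" and zero_A: "0 \<in> A"
    and C_nonneg: "C \<ge> 0"
    and b_meas: "(\<lambda>(x, a). b x a) \<in> borel_measurable (restrict_space borel (UNIV \<times> A))"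
    and b0: "\<And>x. b x 0 = 0"
    and b_lip: "\<And>x1 x2 a. a \<in> A \<Longrightarrow> norm (b x1 a - b x2 a) \<le> C * norm (x1 - x2)"
    and b_growth: "\<And>x a. a \<in> A \<Longrightarrow> norm (b x a) \<le> C * (1 + norm x + norm a)"
    and g_meas: "g \<in> borel_measurable (restrict_space borel A)"
    and g_nonneg: "\<And>a. a \<in> A \<Longrightarrow> g a \<ge> 0"
    and g0: "g 0 = 0"
    and g_conj: "\<And>y. y \<ge> 0 \<Longrightarrow> bdd_above ((\<lambda>a. norm a * y - g a) ` A)"
    and sol: "\<And>\<alpha> x. admissible M F A \<alpha> \<Longrightarrow> strong_solution M F W b \<sigma> \<alpha> x (Xs \<alpha> x)"
begin

sublocale P: prob_space M by (rule prob)

lemma uf1: "\<forall>t\<ge>0. space (F t) = space M \<and> sets (F t) \<subseteq> sets M"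
  using usual unfolding usual_filtration_def by (rule conjunct1)

lemma null_F0: "N \<in> null_sets M \<Longrightarrow> N \<in> sets (F 0)"
  using usual unfolding usual_filtration_def by (metis (no_types, lifting))

lemma space_F: "t \<ge> 0 \<Longrightarrow> space (F t) = space M"
  using uf1 by simp

lemma sets_F: "t \<ge> 0 \<Longrightarrow> sets (F t) \<subseteq> sets M"
  using uf1 by simp

lemma sub: "t \<ge> 0 \<Longrightarrow> subalgebra M (F t)"
  unfolding subalgebra_def using space_F sets_F by simp

lemma W_meas: "t \<ge> 0 \<Longrightarrow> W t \<in> borel_measurable M"
proof -
  assume t: "t \<ge> 0"
  have "W t \<in> borel_measurable (F t)" using BM t unfolding brownian_motion_def by simp
  then show ?thesis by (rule measurable_from_subalg[OF sub[OF t]])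
qed

lemma BM3: "\<forall>s t. 0 \<le> s \<longrightarrow> s < t \<longrightarrow>
        (\<forall>B\<in>sets (F s). \<forall>C\<in>sets borel.
           measure M (B \<inter> {\<omega>\<in>space M. W t \<omega> - W s \<omega> \<in> C})
             = measure M B * measure (density lborel (\<lambda>y. ennreal (gauss_density (t - s) y))) C)"
  using BM unfolding brownian_motion_def by (elim conjE)

lemma W0: "\<omega> \<in> space M \<Longrightarrow> W 0 \<omega> = 0"
  using BM unfolding brownian_motion_def by simp

lemma W_cont: "\<omega> \<in> space M \<Longrightarrow> continuous_on {0..} (\<lambda>t. W t \<omega>)"
  using BM unfolding brownian_motion_def by simp

abbreviation GD :: "real \<Rightarrow> (real^'d) measure" where "GD s \<equiv> density lborel (\<lambda>y. ennreal (gauss_density s y))"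

lemma W_incr:
  assumes "s > 0" and "Cs \<in> sets borel"
  shows "measure M {\<omega>\<in>space M. W s \<omega> \<in> Cs} = measure (GD s) Cs"
proof -
  have sp: "space M \<in> sets (F 0)"
    using space_F[of 0] by (metis order_refl sets.top)
  have "measure M (space M \<inter> {\<omega>\<in>space M. W s \<omega> - W 0 \<omega> \<in> Cs}) = measure M (space M) * measure (GD s) Cs"
    using BM3[rule_format, of 0 s "space M" Cs] assms sp by simp
  moreover have "space M \<inter> {\<omega>\<in>space M. W s \<omega> - W 0 \<omega> \<in> Cs} = {\<omega>\<in>space M. W s \<omega> \<in> Cs}"
    using W0 by auto
  moreover have "measure M (space M) = 1" using P.prob_space .
  ultimately show ?thesis by simp
qed

lemma GD_UNIV:
  assumes "s > 0" shows "emeasure (GD s) UNIV = 1"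
proof -
  have "measure M {\<omega>\<in>space M. W s \<omega> \<in> UNIV} = 1"
    using P.prob_space by simp
  then have m: "measure (GD s) UNIV = 1" using W_incr[OF assms, of UNIV] by simp
  show ?thesis
  proof (cases "emeasure (GD s) UNIV = \<infinity>")
    case True
    then have "measure (GD s) UNIV = 0" by (simp add: measure_def)
    then show ?thesis using m by simp
  next
    case False
    then show ?thesis using m by (simp add: emeasure_eq_ennreal_measure)
  qed
qed

lemma W_law:
  assumes "s > 0" shows "distr M borel (W s) = GD s"
proof (rule measure_eqI)
  show "sets (distr M borel (W s)) = sets (GD s)" by simp
next
  fix Cs assume "Cs \<in> sets (distr M borel (W s))"
  then have Cs: "Cs \<in> sets borel" by simp
  have fin: "emeasure (GD s) Cs \<noteq> \<infinity>"
  proof -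
    have "emeasure (GD s) Cs \<le> emeasure (GD s) UNIV"
      by (rule emeasure_mono) (use Cs in auto)
    then show ?thesis using GD_UNIV[OF assms] by (auto simp: top_unique)
  qed
  have "emeasure (distr M borel (W s)) Cs = emeasure M (W s -` Cs \<inter> space M)"
    by (rule emeasure_distr) (use W_meas assms Cs in auto)
  also have "\<dots> = ennreal (measure M (W s -` Cs \<inter> space M))"
    by (rule P.emeasure_eq_measure)
  also have "W s -` Cs \<inter> space M = {\<omega>\<in>space M. W s \<omega> \<in> Cs}" by auto
  also have "measure M \<dots> = measure (GD s) Cs" using W_incr[OF assms Cs] .
  also have "ennreal \<dots> = emeasure (GD s) Cs" using fin emeasure_eq_ennreal_measure by (metis infinity_ennreal_def)
  finally show "emeasure (distr M borel (W s)) Cs = emeasure (GD s) Cs" .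
qed


definition DW :: real where "DW = 2 * 2 powr (real CARD('d) / 2)"

lemma DW_pos: "DW > 0" unfolding DW_def by simp

lemma EW: assumes s: "s \<ge> 0"
  shows "(\<integral>\<^sup>+\<omega>. ennreal (norm (W s \<omega>)) \<partial>M) \<le> ennreal (DW * sqrt s)"
proof (cases "s = 0")
  case True
  then have "(\<integral>\<^sup>+\<omega>. ennreal (norm (W s \<omega>)) \<partial>M) = (\<integral>\<^sup>+\<omega>. 0 \<partial>M)"
    by (intro nn_integral_cong) (simp add: W0)
  then show ?thesis by simp
next
  case False
  then have s: "s > 0" using s by simp
  have "(\<integral>\<^sup>+\<omega>. ennreal (norm (W s \<omega>)) \<partial>M) = (\<integral>\<^sup>+y. ennreal (norm y) \<partial>distr M borel (W s))"
    by (rule nn_integral_distr[symmetric]) (use W_meas s in auto)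
  also have "\<dots> = (\<integral>\<^sup>+y. ennreal (norm y) \<partial>GD s)" using W_law[OF s] by simp
  also have "\<dots> = (\<integral>\<^sup>+(y::real^'d). ennreal (gauss_density s y) * ennreal (norm y) \<partial>lborel)"
    by (rule nn_integral_density[of "\<lambda>y. ennreal (gauss_density s y)" lborel "\<lambda>y. ennreal (norm y)"])
       (auto simp: gauss_density_def)
  also have "\<dots> \<le> (\<integral>\<^sup>+(y::real^'d). ennreal (DW * sqrt s) * ennreal (gauss_density (2 * s) y) \<partial>lborel)"
  proof (rule nn_integral_mono)
    fix y :: "real^'d"
    have g0: "gauss_density s y \<ge> 0" unfolding gauss_density_def by simp
    have "ennreal (gauss_density s y) * ennreal (norm y) = ennreal (gauss_density s y * norm y)"
      using g0 by (simp add: ennreal_mult)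
    also have "\<dots> \<le> ennreal (DW * sqrt s * gauss_density (2 * s) y)"
      using gauss_bound[OF s, of y] unfolding DW_def by (intro ennreal_leI) simp
    also have "\<dots> = ennreal (DW * sqrt s) * ennreal (gauss_density (2 * s) y)"
      using DW_pos s by (simp add: ennreal_mult gauss_density_def)
    finally show "ennreal (gauss_density s y) * ennreal (norm y) \<le> ennreal (DW * sqrt s) * ennreal (gauss_density (2 * s) y)" .
  qed
  also have "\<dots> = ennreal (DW * sqrt s) * (\<integral>\<^sup>+(y::real^'d). ennreal (gauss_density (2 * s) y) \<partial>lborel)"
    by (rule nn_integral_cmult) (simp add: gauss_density_def)
  also have "(\<integral>\<^sup>+(y::real^'d). ennreal (gauss_density (2 * s) y) \<partial>lborel) = emeasure (GD (2 * s)) UNIV"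
    by (simp add: emeasure_density gauss_density_def)
  also have "\<dots> = 1" using GD_UNIV s by simp
  finally show ?thesis by simp
qed


lemma W_joint: "(\<lambda>x. W (max 0 (snd x)) (fst x)) \<in> borel_measurable (M \<Otimes>\<^sub>M lborel)"
proof (rule borel_measurable_LIMSEQ_metric)
  define p where "p n s = max 0 (real_of_int \<lceil>(real n + 1) * max 0 s\<rceil> / (real n + 1))" for n :: nat and s :: real
  show "(\<lambda>x. W (p n (snd x)) (fst x)) \<in> borel_measurable (M \<Otimes>\<^sub>M lborel)" for n
  proof -
    have "(\<lambda>x. (\<lambda>i x. W (max 0 (real_of_int i / (real n + 1))) (fst x)) (\<lceil>(real n + 1) * max 0 (snd x)\<rceil>) x)
        \<in> borel_measurable (M \<Otimes>\<^sub>M lborel)"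
    proof (rule measurable_compose_countable'[where I="UNIV::int set"])
      fix i :: int
      show "(\<lambda>x. W (max 0 (real_of_int i / (real n + 1))) (fst x)) \<in> borel_measurable (M \<Otimes>\<^sub>M lborel)"
        by (rule measurable_compose[OF measurable_fst W_meas]) simp
    next
      show "(\<lambda>x. \<lceil>(real n + 1) * max 0 (snd x)\<rceil>) \<in> measurable (M \<Otimes>\<^sub>M lborel) (count_space UNIV)"
        by (rule measurable_compose[OF _ measurable_real_ceiling]) measurable
    qed simp
    then show ?thesis unfolding p_def by simp
  qed
  fix x :: "'a \<times> real" assume "x \<in> space (M \<Otimes>\<^sub>M lborel)"
  then have x: "fst x \<in> space M" by (auto simp: space_pair_measure)
  define s0 where "s0 = max 0 (snd x)"
  have s0: "s0 \<ge> 0" unfolding s0_def by simp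
  have pl: "s0 \<le> p n (snd x)" for n
  proof -
    have "(real n + 1) * s0 \<le> real_of_int \<lceil>(real n + 1) * s0\<rceil>" by (rule le_of_int_ceiling)
    then have "s0 \<le> real_of_int \<lceil>(real n + 1) * s0\<rceil> / (real n + 1)"
      by (simp add: pos_le_divide_eq mult.commute)
    then show ?thesis unfolding p_def s0_def[symmetric] by linarith
  qed
  have pu: "p n (snd x) \<le> s0 + inverse (real (Suc n))" for n
  proof -
    have "real_of_int \<lceil>(real n + 1) * s0\<rceil> \<le> (real n + 1) * s0 + 1" by (rule of_int_ceiling_le_add_one)
    then have "real_of_int \<lceil>(real n + 1) * s0\<rceil> / (real n + 1) \<le> ((real n + 1) * s0 + 1) / (real n + 1)"
      by (rule divide_right_mono) simp
    also have "((real n + 1) * s0 + 1) / (real n + 1) = s0 + inverse (real (Suc n))"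
      by (simp add: field_simps)
    finally have "real_of_int \<lceil>(real n + 1) * s0\<rceil> / (real n + 1) \<le> s0 + inverse (real (Suc n))" .
    then show ?thesis unfolding p_def s0_def[symmetric] using s0 by simp
  qed
  have "(\<lambda>n. p n (snd x)) \<longlonglongrightarrow> s0"
    by (rule tendsto_sandwich[OF _ _ tendsto_const LIMSEQ_inverse_real_of_nat_add]) (use pl pu in auto)
  then show "(\<lambda>n. W (p n (snd x)) (fst x)) \<longlonglongrightarrow> W (max 0 (snd x)) (fst x)"
    unfolding s0_def[symmetric]
    by (rule continuous_on_tendsto_compose[OF W_cont[OF x]]) (use s0 pl in \<open>auto intro!: always_eventually intro: order_trans\<close>)
qed

lemma EW_int: assumes t: "t \<ge> 0"
  shows "(\<integral>\<^sup>+\<omega>. (\<integral>\<^sup>+s. ennreal (norm (W s \<omega>)) * indicator {0..t} s \<partial>lborel) \<partial>M) \<le> ennreal (DW * sqrt t * t)"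
proof -
  interpret PS: pair_sigma_finite M lborel
    by (intro pair_sigma_finite.intro P.sigma_finite_measure_axioms lborel.sigma_finite_measure_axioms)
  define f where "f \<omega> s = ennreal (norm (W (max 0 s) \<omega>)) * indicator {0..t} s" for \<omega> s
  have fm: "case_prod f \<in> borel_measurable (M \<Otimes>\<^sub>M lborel)"
  proof -
    have "(\<lambda>x. ennreal (norm (W (max 0 (snd x)) (fst x))) * indicator {0..t} (snd x)) \<in> borel_measurable (M \<Otimes>\<^sub>M lborel)"
      using W_joint by measurable
    then show ?thesis unfolding f_def by (simp add: case_prod_beta')
  qed
  have "(\<integral>\<^sup>+\<omega>. (\<integral>\<^sup>+s. ennreal (norm (W s \<omega>)) * indicator {0..t} s \<partial>lborel) \<partial>M)
      = (\<integral>\<^sup>+\<omega>. (\<integral>\<^sup>+s. f \<omega> s \<partial>lborel) \<partial>M)"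
    unfolding f_def by (intro nn_integral_cong) (auto split: split_indicator)
  also have "\<dots> = (\<integral>\<^sup>+s. (\<integral>\<^sup>+\<omega>. f \<omega> s \<partial>M) \<partial>lborel)"
    by (rule PS.Fubini'[symmetric, OF fm])
  also have "\<dots> \<le> (\<integral>\<^sup>+s. ennreal (DW * sqrt t) * indicator {0..t} s \<partial>lborel)"
  proof (rule nn_integral_mono)
    fix s :: real
    show "(\<integral>\<^sup>+\<omega>. f \<omega> s \<partial>M) \<le> ennreal (DW * sqrt t) * indicator {0..t} s"
    proof (cases "s \<in> {0..t}")
      case True
      then have "(\<integral>\<^sup>+\<omega>. f \<omega> s \<partial>M) = (\<integral>\<^sup>+\<omega>. ennreal (norm (W s \<omega>)) \<partial>M)"
        unfolding f_def by simp
      also have "\<dots> \<le> ennreal (DW * sqrt s)" using EW True by simp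
      also have "\<dots> \<le> ennreal (DW * sqrt t)" using True DW_pos
        by (intro ennreal_leI mult_left_mono) auto
      finally show ?thesis using True by simp
    next
      case False then show ?thesis unfolding f_def by simp
    qed
  qed
  also have "\<dots> = ennreal (DW * sqrt t) * emeasure lborel {0..t}"
    by (simp add: nn_integral_cmult_indicator)
  also have "\<dots> = ennreal (DW * sqrt t * t)" using t DW_pos by (simp add: ennreal_mult)
  finally show ?thesis .
qed


abbreviation adm where "adm \<alpha> \<equiv> admissible M F A \<alpha>"

lemma adm_prog: "adm \<alpha> \<Longrightarrow> progressive M F \<alpha>"
  unfolding admissible_def by (elim conjE)

lemma adm_A: "adm \<alpha> \<Longrightarrow> \<omega> \<in> space M \<Longrightarrow> s \<ge> 0 \<Longrightarrow> \<alpha> \<omega> s \<in> A"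
  unfolding admissible_def by (elim conjE) simp

lemma adm_int: "adm \<alpha> \<Longrightarrow> t \<ge> 0 \<Longrightarrow>
   (\<integral>\<^sup>+\<omega>. (\<integral>\<^sup>+s. ennreal (norm (\<alpha> \<omega> s)) * indicator {0..t} s \<partial>lborel) \<partial>M) < \<infinity>"
  unfolding admissible_def by (elim conjE) simp

lemma zero_adm: "adm (\<lambda>\<omega> s. 0)"
  unfolding admissible_def progressive_def using zero_A by simp

lemma alpha_joint:
  fixes h :: "real^'m \<Rightarrow> 'z::topological_space"
  assumes a: "adm \<alpha>" and t: "t \<ge> 0" and h: "h \<in> borel_measurable (restrict_space borel A)"
  shows "(\<lambda>(\<omega>, s). h (\<alpha> \<omega> s)) \<in> borel_measurable (F t \<Otimes>\<^sub>M restrict_space lborel {0..t})"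
proof -
  have "(\<lambda>(\<omega>, s). \<alpha> \<omega> s) \<in> borel_measurable (F t \<Otimes>\<^sub>M restrict_space borel {0..t})"
    using adm_prog[OF a] t unfolding progressive_def by simp
  then have m: "(\<lambda>(\<omega>, s). \<alpha> \<omega> s) \<in> borel_measurable (F t \<Otimes>\<^sub>M restrict_space lborel {0..t})"
  proof -
    have "measurable (F t \<Otimes>\<^sub>M restrict_space lborel {0..t}) (borel::(real^'m) measure)
        = measurable (F t \<Otimes>\<^sub>M restrict_space borel {0..t}) borel"
      by (intro measurable_cong_sets sets_pair_measure_cong sets_restrict_space_cong) simp_all
    then show ?thesis using \<open>(\<lambda>(\<omega>, s). \<alpha> \<omega> s) \<in> borel_measurable (F t \<Otimes>\<^sub>M restrict_space borel {0..t})\<close> by simp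
  qed
  have "(\<lambda>(\<omega>, s). \<alpha> \<omega> s) \<in> measurable (F t \<Otimes>\<^sub>M restrict_space lborel {0..t}) (restrict_space borel A)"
  proof (rule measurable_restrict_space2[OF _ m])
    show "(\<lambda>(\<omega>, s). \<alpha> \<omega> s) \<in> space (F t \<Otimes>\<^sub>M restrict_space lborel {0..t}) \<rightarrow> A"
      using adm_A[OF a] space_F[OF t] by (auto simp: space_pair_measure space_restrict_space)
  qed
  from measurable_compose[OF this h] show ?thesis by (simp add: case_prod_beta')
qed

lemma alpha_nnint_meas:
  assumes a: "adm \<alpha>" and t: "t \<ge> 0" and h: "h \<in> borel_measurable (restrict_space borel A)"
  shows "(\<lambda>\<omega>. \<integral>\<^sup>+s. ennreal (h (\<alpha> \<omega> s)) * indicator {0..t} s \<partial>lborel) \<in> borel_measurable M"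
proof -
  interpret R: sigma_finite_measure "restrict_space lborel {0..t::real}"
    by (rule sigma_finite_measure_restrict_space) (auto intro: lborel.sigma_finite_measure_axioms)
  have eq: "(\<integral>\<^sup>+s. ennreal (h (\<alpha> \<omega> s)) * indicator {0..t} s \<partial>lborel)
     = (\<integral>\<^sup>+s. ennreal (h (\<alpha> \<omega> s)) \<partial>restrict_space lborel {0..t})" for \<omega>
    by (rule nn_integral_restrict_space[symmetric]) simp
  have hm: "(\<lambda>x. ennreal (h x)) \<in> borel_measurable (restrict_space borel A)"
    using h by measurable
  have "(\<lambda>\<omega>. \<integral>\<^sup>+s. ennreal (h (\<alpha> \<omega> s)) \<partial>restrict_space lborel {0..t}) \<in> borel_measurable (F t)"
    by (rule R.borel_measurable_nn_integral) (rule alpha_joint[OF a t hm])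
  then have "(\<lambda>\<omega>. \<integral>\<^sup>+s. ennreal (h (\<alpha> \<omega> s)) \<partial>restrict_space lborel {0..t}) \<in> borel_measurable M"
    by (rule measurable_from_subalg[OF sub[OF t]])
  then show ?thesis unfolding eq .
qed

lemma alpha_sec:
  fixes h :: "real^'m \<Rightarrow> real"
  assumes a: "adm \<alpha>" and t: "t \<ge> 0" and h: "h \<in> borel_measurable (restrict_space borel A)"
    and \<omega>: "\<omega> \<in> space M"
  shows "(\<lambda>s. indicator {0..t} s *\<^sub>R h (\<alpha> \<omega> s)) \<in> borel_measurable lborel"
proof -
  have "(\<lambda>s. (\<lambda>(\<omega>, s). h (\<alpha> \<omega> s)) (\<omega>, s)) \<in> borel_measurable (restrict_space lborel {0..t})"
    by (rule measurable_Pair2[OF alpha_joint[OF a t h]]) (simp add: space_F[OF t] \<omega>)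
  then have "(\<lambda>s. h (\<alpha> \<omega> s)) \<in> borel_measurable (restrict_space lborel {0..t})" by simp
  then show ?thesis by (subst (asm) borel_measurable_restrict_space_iff) auto
qed

lemma norm_meas_A: "(\<lambda>a::real^'m. norm a) \<in> borel_measurable (restrict_space borel A)"
  by (rule measurable_restrict_space1) simp


definition Aint :: "('a \<Rightarrow> real \<Rightarrow> real^'m) \<Rightarrow> real \<Rightarrow> 'a \<Rightarrow> ennreal" where
  "Aint \<alpha> t \<omega> = (\<integral>\<^sup>+s. ennreal (norm (\<alpha> \<omega> s)) * indicator {0..t} s \<partial>lborel)"

definition IW :: "real \<Rightarrow> 'a \<Rightarrow> ennreal" where
  "IW t \<omega> = (\<integral>\<^sup>+s. ennreal (norm (W s \<omega>)) * indicator {0..t} s \<partial>lborel)"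

definition Rb where
  "Rb \<alpha> x t \<omega> = ennreal (\<sigma> * norm (W t \<omega>)) + ennreal (C * t) + ennreal C * Aint \<alpha> t \<omega>
     + ennreal (C * exp (C * t)) * (ennreal (t * (norm x + C * t)) + ennreal (C * t) * Aint \<alpha> t \<omega> + ennreal \<sigma> * IW t \<omega>)"

lemma sol_meas: "adm \<alpha> \<Longrightarrow> t \<ge> 0 \<Longrightarrow> Xs \<alpha> x t \<in> borel_measurable M"
  using sol[of \<alpha> x] measurable_from_subalg[OF sub] unfolding strong_solution_def by blast

lemma sol_AE: assumes a: "adm \<alpha>" shows "AE \<omega> in M. continuous_on {0..} (\<lambda>t. Xs \<alpha> x t \<omega>) \<and>
        (\<forall>t\<ge>0. set_integrable lborel {0..t} (\<lambda>s. b (Xs \<alpha> x s \<omega>) (\<alpha> \<omega> s)) \<and>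
                Xs \<alpha> x t \<omega> = x + (\<integral>s\<in>{0..t}. b (Xs \<alpha> x s \<omega>) (\<alpha> \<omega> s) \<partial>lborel) + \<sigma> *\<^sub>R W t \<omega>)"
  using sol[OF a, of x] unfolding strong_solution_def by (elim conjE)

lemma Aint_meas: "adm \<alpha> \<Longrightarrow> t \<ge> 0 \<Longrightarrow> Aint \<alpha> t \<in> borel_measurable M"
  unfolding Aint_def[abs_def] by (rule alpha_nnint_meas[OF _ _ norm_meas_A])

lemma Aint_fin: assumes a: "adm \<alpha>" and t: "t \<ge> 0" shows "AE \<omega> in M. Aint \<alpha> t \<omega> \<noteq> \<infinity>"
  by (rule nn_integral_PInf_AE[OF Aint_meas[OF a t]]) (use adm_int[OF a t] in \<open>auto simp: Aint_def[abs_def]\<close>)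

lemma path_facts:
  assumes a: "adm \<alpha>" and t: "t \<ge> 0" and \<omega>: "\<omega> \<in> space M" and fin: "Aint \<alpha> t \<omega> \<noteq> \<infinity>"
  shows "(\<lambda>r. norm (\<alpha> \<omega> r)) integrable_on {0..t}"
    "Aint \<alpha> t \<omega> = ennreal (integral {0..t} (\<lambda>r. norm (\<alpha> \<omega> r)))"
    "IW t \<omega> = ennreal (integral {0..t} (\<lambda>r. norm (W r \<omega>)))"
    "continuous_on {0..t} (\<lambda>r. W r \<omega>)"
proof -
  have m: "(\<lambda>s. indicator {0..t} s *\<^sub>R norm (\<alpha> \<omega> s)) \<in> borel_measurable lborel"
    by (rule alpha_sec[OF a t norm_meas_A \<omega>])
  have f: "(\<integral>\<^sup>+s. ennreal (norm (\<alpha> \<omega> s)) * indicator {0..t} s \<partial>lborel) < \<infinity>"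
    using fin unfolding Aint_def by (simp add: less_top)
  show "(\<lambda>r. norm (\<alpha> \<omega> r)) integrable_on {0..t}" by (rule nn_fin(1)[OF m _ f]) simp
  show "Aint \<alpha> t \<omega> = ennreal (integral {0..t} (\<lambda>r. norm (\<alpha> \<omega> r)))"
    unfolding Aint_def by (rule nn_fin(2)[OF m _ f]) simp
  show cw: "continuous_on {0..t} (\<lambda>r. W r \<omega>)"
    by (rule continuous_on_subset[OF W_cont[OF \<omega>]]) auto
  show "IW t \<omega> = ennreal (integral {0..t} (\<lambda>r. norm (W r \<omega>)))"
    unfolding IW_def by (rule nn_cont) (intro continuous_intros cw, simp)
qed

lemma path_good:
  assumes a: "adm \<alpha>" and t: "t \<ge> 0"
  shows "AE \<omega> in M. ennreal (norm (Xs \<alpha> x t \<omega> - x)) \<le> Rb \<alpha> x t \<omega>"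
  using AE_space sol_AE[OF a, of x] Aint_fin[OF a t]
proof eventually_elim
  case (elim \<omega>)
  note \<omega> = elim(1)
  note fin = elim(3)
  define X where "X s = Xs \<alpha> x s \<omega>" for s
  note pf = path_facts[OF a t \<omega> fin]
  have cX: "continuous_on {0..t} X"
    unfolding X_def by (rule continuous_on_subset[OF elim(2)[THEN conjunct1]]) auto
  have sol2: "\<forall>t\<ge>0. set_integrable lborel {0..t} (\<lambda>s. b (X s) (\<alpha> \<omega> s)) \<and>
                X t = x + (\<integral>s\<in>{0..t}. b (X s) (\<alpha> \<omega> s) \<partial>lborel) + \<sigma> *\<^sub>R W t \<omega>"
    using elim(2) unfolding X_def by simp
  have bint: "(\<lambda>r. b (X r) (\<alpha> \<omega> r)) integrable_on {0..s}" if "s \<in> {0..t}" for s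
    using sol2 that set_borel_integral_eq_integral(1) by auto
  have eq: "X s = x + integral {0..s} (\<lambda>r. b (X r) (\<alpha> \<omega> r)) + \<sigma> *\<^sub>R W s \<omega>" if "s \<in> {0..t}" for s
    using sol2 that set_borel_integral_eq_integral(2) by auto
  have growth: "norm (b (X r) (\<alpha> \<omega> r)) \<le> C * (1 + norm (X r) + norm (\<alpha> \<omega> r))" if "r \<in> {0..t}" for r
    using b_growth adm_A[OF a \<omega>] that by auto
  define Ar where "Ar = integral {0..t} (\<lambda>r. norm (\<alpha> \<omega> r))"
  define Iw where "Iw = integral {0..t} (\<lambda>r. norm (W r \<omega>))"
  have Ar0: "Ar \<ge> 0" unfolding Ar_def by (rule integral_nonneg[OF pf(1)]) simp
  have Iw0: "Iw \<ge> 0" unfolding Iw_def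
    by (rule integral_nonneg[OF integrable_continuous_real]) (intro continuous_intros pf(4), simp)
  have "norm (X t - x) \<le> \<sigma> * norm (W t \<omega>) + C * t + C * Ar
     + C * (exp (C * t) * (t * (norm x + C * t + C * Ar) + \<sigma> * Iw))"
    unfolding Ar_def Iw_def
    by (rule det_path[OF t C_nonneg less_imp_le[OF sigma_pos] cX pf(4) bint eq growth pf(1)])
  also have "\<dots> = \<sigma> * norm (W t \<omega>) + C * t + C * Ar
     + C * exp (C * t) * (t * (norm x + C * t) + C * t * Ar + \<sigma> * Iw)"
    by (simp add: algebra_simps)
  finally have r: "ennreal (norm (X t - x)) \<le> ennreal (\<sigma> * norm (W t \<omega>) + C * t + C * Ar
     + C * exp (C * t) * (t * (norm x + C * t) + C * t * Ar + \<sigma> * Iw))"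
    by (rule ennreal_leI)
  have nn: "\<sigma> * norm (W t \<omega>) \<ge> 0" "C * t \<ge> 0" "C * Ar \<ge> 0" "C * exp (C * t) \<ge> 0"
    "t * (norm x + C * t) \<ge> 0" "C * t * Ar \<ge> 0" "\<sigma> * Iw \<ge> 0"
    using sigma_pos C_nonneg t Ar0 Iw0 by auto
  have "ennreal (\<sigma> * norm (W t \<omega>) + C * t + C * Ar
     + C * exp (C * t) * (t * (norm x + C * t) + C * t * Ar + \<sigma> * Iw)) = Rb \<alpha> x t \<omega>"
    unfolding Rb_def pf(2) pf(3) Ar_def[symmetric] Iw_def[symmetric]
    using nn sigma_pos C_nonneg t Ar0 Iw0
    by (simp add: ennreal_plus[symmetric] ennreal_mult[symmetric] del: ennreal_plus)
  with r show ?case unfolding X_def by simp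
qed


lemma IW_meas: assumes t: "t \<ge> 0" shows "IW t \<in> borel_measurable M"
proof -
  have m: "(\<lambda>x. ennreal (norm (W (max 0 (snd x)) (fst x))) * indicator {0..t} (snd x)) \<in> borel_measurable (M \<Otimes>\<^sub>M lborel)"
    using W_joint by measurable
  have "(\<lambda>\<omega>. \<integral>\<^sup>+s. ennreal (norm (W (max 0 s) \<omega>)) * indicator {0..t} s \<partial>lborel) \<in> borel_measurable M"
    by (rule lborel.borel_measurable_nn_integral) (use m in \<open>simp add: case_prod_beta'\<close>)
  moreover have "(\<integral>\<^sup>+s. ennreal (norm (W (max 0 s) \<omega>)) * indicator {0..t} s \<partial>lborel) = IW t \<omega>" for \<omega>
    unfolding IW_def by (intro nn_integral_cong) (auto split: split_indicator)
  ultimately show ?thesis by simp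
qed

lemma EIW: assumes t: "t \<ge> 0" shows "(\<integral>\<^sup>+\<omega>. IW t \<omega> \<partial>M) \<le> ennreal (DW * sqrt t * t)"
  using EW_int[OF t] unfolding IW_def .

abbreviation EA where "EA \<alpha> t \<equiv> (\<integral>\<^sup>+\<omega>. Aint \<alpha> t \<omega> \<partial>M)"

definition Phi :: "real \<Rightarrow> real \<Rightarrow> real \<Rightarrow> real" where
  "Phi t n a = \<sigma> * DW * sqrt t + C * t + C * a + C * exp (C * t) * (t * (n + C * t) + C * t * a + \<sigma> * (DW * sqrt t * t))"

lemma EXdev:
  assumes a: "adm \<alpha>" and t: "t \<ge> 0" and aa: "a \<ge> 0" and EA: "EA \<alpha> t \<le> ennreal a"
  shows "(\<integral>\<^sup>+\<omega>. ennreal (norm (Xs \<alpha> x t \<omega> - x)) \<partial>M) \<le> ennreal (Phi t (norm x) a)"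
proof -
  have Am: "Aint \<alpha> t \<in> borel_measurable M" by (rule Aint_meas[OF a t])
  have Im: "IW t \<in> borel_measurable M" by (rule IW_meas[OF t])
  have Wm: "W t \<in> borel_measurable M" by (rule W_meas[OF t])
  have "(\<integral>\<^sup>+\<omega>. ennreal (norm (Xs \<alpha> x t \<omega> - x)) \<partial>M) \<le> (\<integral>\<^sup>+\<omega>. Rb \<alpha> x t \<omega> \<partial>M)"
    by (rule nn_integral_mono_AE[OF path_good[OF a t]])
  also have "(\<integral>\<^sup>+\<omega>. Rb \<alpha> x t \<omega> \<partial>M) =
      (\<integral>\<^sup>+\<omega>. ennreal (\<sigma> * norm (W t \<omega>)) \<partial>M) + ennreal (C * t) + ennreal C * EA \<alpha> t
     + ennreal (C * exp (C * t)) * (ennreal (t * (norm x + C * t)) + ennreal (C * t) * EA \<alpha> t + ennreal \<sigma> * (\<integral>\<^sup>+\<omega>. IW t \<omega> \<partial>M))"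
    unfolding Rb_def using Am Im Wm
    by (simp add: nn_integral_add nn_integral_cmult P.emeasure_space_1)
  also have "(\<integral>\<^sup>+\<omega>. ennreal (\<sigma> * norm (W t \<omega>)) \<partial>M) = ennreal \<sigma> * (\<integral>\<^sup>+\<omega>. ennreal (norm (W t \<omega>)) \<partial>M)"
    using sigma_pos Wm by (simp add: ennreal_mult nn_integral_cmult)
  also have "\<dots> \<le> ennreal \<sigma> * ennreal (DW * sqrt t)" by (intro mult_left_mono EW[OF t]) simp
  also have "EA \<alpha> t \<le> ennreal a" by (rule EA)
  also have "(\<integral>\<^sup>+\<omega>. IW t \<omega> \<partial>M) \<le> ennreal (DW * sqrt t * t)" by (rule EIW[OF t])
  also have "ennreal \<sigma> * ennreal (DW * sqrt t) + ennreal (C * t) + ennreal C * ennreal a +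
    ennreal (C * exp (C * t)) * (ennreal (t * (norm x + C * t)) + ennreal (C * t) * ennreal a + ennreal \<sigma> * ennreal (DW * sqrt t * t))
    = ennreal (Phi t (norm x) a)"
    unfolding Phi_def using sigma_pos C_nonneg t aa DW_pos
    by (simp add: ennreal_plus[symmetric] ennreal_mult[symmetric] mult_ac del: ennreal_plus)
  finally show ?thesis by (simp add: mult_left_mono add_mono)
qed


definition Jint :: "('a \<Rightarrow> real \<Rightarrow> real^'m) \<Rightarrow> real \<Rightarrow> 'a \<Rightarrow> ennreal" where
  "Jint \<alpha> t \<omega> = (\<integral>\<^sup>+s. ennreal (g (\<alpha> \<omega> s)) * indicator {0..t} s \<partial>lborel)"

abbreviation EJ where "EJ \<alpha> t \<equiv> (\<integral>\<^sup>+\<omega>. Jint \<alpha> t \<omega> \<partial>M)"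

definition Gc :: "real \<Rightarrow> real" where "Gc y = (SUP a\<in>A. norm a * y - g a)"

lemma Gc_ge: "y \<ge> 0 \<Longrightarrow> a \<in> A \<Longrightarrow> norm a * y - g a \<le> Gc y"
  unfolding Gc_def by (rule cSUP_upper[OF _ g_conj])

lemma Gc_nonneg: "y \<ge> 0 \<Longrightarrow> Gc y \<ge> 0"
  using Gc_ge[OF _ zero_A] g0 by simp

lemma Jint_meas: "adm \<alpha> \<Longrightarrow> t \<ge> 0 \<Longrightarrow> Jint \<alpha> t \<in> borel_measurable M"
  unfolding Jint_def[abs_def] by (rule alpha_nnint_meas[OF _ _ g_meas])

lemma EA_EJ:
  assumes a: "adm \<alpha>" and t: "t \<ge> 0" and y: "y > 0"
  shows "EA \<alpha> t \<le> ennreal (1 / y) * EJ \<alpha> t + ennreal (t * Gc y / y)"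
proof -
  have pw: "Aint \<alpha> t \<omega> \<le> ennreal (1 / y) * Jint \<alpha> t \<omega> + ennreal (t * Gc y / y)" if \<omega>: "\<omega> \<in> space M" for \<omega>
  proof -
    have gm: "(\<lambda>s. ennreal (g (\<alpha> \<omega> s)) * indicator {0..t} s) \<in> borel_measurable lborel"
    proof -
      have "(\<lambda>s. ennreal (indicator {0..t} s *\<^sub>R g (\<alpha> \<omega> s))) \<in> borel_measurable lborel"
        using alpha_sec[OF a t g_meas \<omega>] by measurable
      moreover have "ennreal (indicator {0..t} s *\<^sub>R g (\<alpha> \<omega> s)) = ennreal (g (\<alpha> \<omega> s)) * indicator {0..t} s" for s
        by (auto split: split_indicator)
      ultimately show ?thesis by simp
    qed
    have "Aint \<alpha> t \<omega> \<le> (\<integral>\<^sup>+s. ennreal (1 / y) * (ennreal (g (\<alpha> \<omega> s)) * indicator {0..t} s) + ennreal (Gc y / y) * indicator {0..t} s \<partial>lborel)"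
      unfolding Aint_def
    proof (rule nn_integral_mono)
      fix s
      show "ennreal (norm (\<alpha> \<omega> s)) * indicator {0..t} s \<le> ennreal (1 / y) * (ennreal (g (\<alpha> \<omega> s)) * indicator {0..t} s) + ennreal (Gc y / y) * indicator {0..t} s"
      proof (cases "s \<in> {0..t}")
        case True
        then have aA: "\<alpha> \<omega> s \<in> A" using adm_A[OF a \<omega>] by auto
        have g0': "g (\<alpha> \<omega> s) \<ge> 0" using g_nonneg[OF aA] .
        have "norm (\<alpha> \<omega> s) * y - g (\<alpha> \<omega> s) \<le> Gc y" using Gc_ge[OF _ aA] y by simp
        then have "norm (\<alpha> \<omega> s) \<le> 1 / y * g (\<alpha> \<omega> s) + Gc y / y" using y by (simp add: field_simps)
        then have "ennreal (norm (\<alpha> \<omega> s)) \<le> ennreal (1 / y * g (\<alpha> \<omega> s) + Gc y / y)" by (rule ennreal_leI)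
        also have "\<dots> = ennreal (1 / y) * ennreal (g (\<alpha> \<omega> s)) + ennreal (Gc y / y)"
          using y g0' Gc_nonneg[of y] by (simp add: ennreal_plus ennreal_mult[symmetric])
        finally show ?thesis using True by simp
      qed simp
    qed
    also have "\<dots> = ennreal (1 / y) * Jint \<alpha> t \<omega> + ennreal (Gc y / y) * emeasure lborel {0..t}"
      unfolding Jint_def using gm by (simp add: nn_integral_add nn_integral_cmult nn_integral_cmult_indicator)
    also have "ennreal (Gc y / y) * emeasure lborel {0..t} = ennreal (t * Gc y / y)"
      using t y Gc_nonneg[of y] by (simp add: ennreal_mult[symmetric])
    finally show ?thesis .
  qed
  have "EA \<alpha> t \<le> (\<integral>\<^sup>+\<omega>. ennreal (1 / y) * Jint \<alpha> t \<omega> + ennreal (t * Gc y / y) \<partial>M)"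
    by (rule nn_integral_mono) (use pw in auto)
  also have "\<dots> = ennreal (1 / y) * EJ \<alpha> t + ennreal (t * Gc y / y)"
    using Jint_meas[OF a t] by (simp add: nn_integral_add nn_integral_cmult P.emeasure_space_1)
  finally show ?thesis .
qed

lemma Lip:
  assumes a: "adm \<alpha>" and t: "t \<ge> 0"
  shows "AE \<omega> in M. norm (Xs \<alpha> x t \<omega> - Xs \<alpha> x' t \<omega>) \<le> norm (x - x') * (1 + C * t * exp (C * t))"
  using AE_space sol_AE[OF a, of x] sol_AE[OF a, of x']
proof eventually_elim
  case (elim \<omega>)
  note \<omega> = elim(1)
  define X1 where "X1 s = Xs \<alpha> x s \<omega>" for s
  define X2 where "X2 s = Xs \<alpha> x' s \<omega>" for s
  have c1: "continuous_on {0..t} X1"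
    unfolding X1_def by (rule continuous_on_subset[OF elim(2)[THEN conjunct1]]) auto
  have c2: "continuous_on {0..t} X2"
    unfolding X2_def by (rule continuous_on_subset[OF elim(3)[THEN conjunct1]]) auto
  have s1: "\<forall>t\<ge>0. set_integrable lborel {0..t} (\<lambda>s. b (X1 s) (\<alpha> \<omega> s)) \<and>
                X1 t = x + (\<integral>s\<in>{0..t}. b (X1 s) (\<alpha> \<omega> s) \<partial>lborel) + \<sigma> *\<^sub>R W t \<omega>"
    using elim(2) unfolding X1_def by simp
  have s2: "\<forall>t\<ge>0. set_integrable lborel {0..t} (\<lambda>s. b (X2 s) (\<alpha> \<omega> s)) \<and>
                X2 t = x' + (\<integral>s\<in>{0..t}. b (X2 s) (\<alpha> \<omega> s) \<partial>lborel) + \<sigma> *\<^sub>R W t \<omega>"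
    using elim(3) unfolding X2_def by simp
  have "norm (X1 t - X2 t) \<le> norm (x - x') * (1 + C * t * exp (C * t))"
  proof (rule det_lip[OF t C_nonneg c1 c2])
    show "(\<lambda>r. b (X1 r) (\<alpha> \<omega> r)) integrable_on {0..s}" if "s \<in> {0..t}" for s
      using s1 that set_borel_integral_eq_integral(1) by auto
    show "(\<lambda>r. b (X2 r) (\<alpha> \<omega> r)) integrable_on {0..s}" if "s \<in> {0..t}" for s
      using s2 that set_borel_integral_eq_integral(1) by auto
    show "X1 s = x + integral {0..s} (\<lambda>r. b (X1 r) (\<alpha> \<omega> r)) + \<sigma> *\<^sub>R W s \<omega>" if "s \<in> {0..t}" for s
      using s1 that set_borel_integral_eq_integral(2) by auto
    show "X2 s = x' + integral {0..s} (\<lambda>r. b (X2 r) (\<alpha> \<omega> r)) + \<sigma> *\<^sub>R W s \<omega>" if "s \<in> {0..t}" for s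
      using s2 that set_borel_integral_eq_integral(2) by auto
    show "norm (b (X1 r) (\<alpha> \<omega> r) - b (X2 r) (\<alpha> \<omega> r)) \<le> C * norm (X1 r - X2 r)" if "r \<in> {0..t}" for r
      using b_lip adm_A[OF a \<omega>] that by auto
  qed
  then show ?case unfolding X1_def X2_def .
qed

lemma markov:
  fixes f :: "'a \<Rightarrow> real"
  assumes f: "f \<in> borel_measurable M" and K: "K > 0" and c: "(\<integral>\<^sup>+\<omega>. ennreal (f \<omega>) \<partial>M) \<le> ennreal c" and c0: "c \<ge> 0"
  shows "measure M {\<omega>\<in>space M. K \<le> f \<omega>} \<le> c / K"
proof -
  have "emeasure M {\<omega>\<in>space M. 1 \<le> ennreal (1 / K) * ennreal (f \<omega>)} \<le> ennreal (1 / K) * (\<integral>\<^sup>+\<omega>. ennreal (f \<omega>) * indicator (space M) \<omega> \<partial>M)"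
    by (rule nn_integral_Markov_inequality) (use f in auto)
  also have "(\<integral>\<^sup>+\<omega>. ennreal (f \<omega>) * indicator (space M) \<omega> \<partial>M) = (\<integral>\<^sup>+\<omega>. ennreal (f \<omega>) \<partial>M)"
    by (intro nn_integral_cong) simp
  also have "ennreal (1 / K) * \<dots> \<le> ennreal (1 / K) * ennreal c" by (intro mult_left_mono c) simp
  also have "\<dots> = ennreal (c / K)" using K c0 by (simp add: ennreal_mult[symmetric])
  also have "{\<omega>\<in>space M. 1 \<le> ennreal (1 / K) * ennreal (f \<omega>)} = {\<omega>\<in>space M. K \<le> f \<omega>}"
  proof -
    have "1 \<le> ennreal (1 / K) * ennreal v \<longleftrightarrow> K \<le> v" for v
    proof (cases "v \<ge> 0")
      case True
      then have "ennreal (1 / K) * ennreal v = ennreal (v / K)" using K by (simp add: ennreal_mult[symmetric])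
      then show ?thesis using K True by (simp add: ennreal_1[symmetric] del: ennreal_1)
    next
      case False
      then show ?thesis using K by (simp add: ennreal_neg)
    qed
    then show ?thesis by simp
  qed
  finally show ?thesis using K c0 by (simp add: P.emeasure_eq_measure)
qed

lemma int_diff:
  fixes f1 f2 :: "'a \<Rightarrow> real"
  assumes m1: "f1 \<in> borel_measurable M" and m2: "f2 \<in> borel_measurable M"
    and b1: "\<And>\<omega>. \<omega> \<in> space M \<Longrightarrow> \<bar>f1 \<omega>\<bar> \<le> R" and b2: "\<And>\<omega>. \<omega> \<in> space M \<Longrightarrow> \<bar>f2 \<omega>\<bar> \<le> R"
    and Bad: "Bad \<in> sets M" and good: "AE \<omega> in M. \<omega> \<notin> Bad \<longrightarrow> \<bar>f1 \<omega> - f2 \<omega>\<bar> \<le> \<eta>"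
    and \<eta>: "\<eta> \<ge> 0"
  shows "\<bar>(\<integral>\<omega>. f1 \<omega> \<partial>M) - (\<integral>\<omega>. f2 \<omega> \<partial>M)\<bar> \<le> \<eta> + 2 * R * measure M Bad"
proof -
  have i1: "integrable M f1" by (rule P.integrable_const_bound[of _ R]) (use b1 m1 in auto)
  have i2: "integrable M f2" by (rule P.integrable_const_bound[of _ R]) (use b2 m2 in auto)
  have "\<bar>(\<integral>\<omega>. f1 \<omega> \<partial>M) - (\<integral>\<omega>. f2 \<omega> \<partial>M)\<bar> = \<bar>\<integral>\<omega>. f1 \<omega> - f2 \<omega> \<partial>M\<bar>"
    using i1 i2 by simp
  also have "\<dots> \<le> (\<integral>\<omega>. \<bar>f1 \<omega> - f2 \<omega>\<bar> \<partial>M)" by (rule integral_abs_bound)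
  also have "\<dots> \<le> (\<integral>\<omega>. \<eta> + 2 * R * indicator Bad \<omega> \<partial>M)"
  proof (rule integral_mono_AE)
    show "integrable M (\<lambda>\<omega>. \<bar>f1 \<omega> - f2 \<omega>\<bar>)" using i1 i2 by auto
    show "integrable M (\<lambda>\<omega>. \<eta> + 2 * R * indicator Bad \<omega>)"
      using Bad by (intro Bochner_Integration.integrable_add integrable_mult_right integrable_real_indicator) (auto simp: less_top[symmetric])
    show "AE \<omega> in M. \<bar>f1 \<omega> - f2 \<omega>\<bar> \<le> \<eta> + 2 * R * indicator Bad \<omega>"
      using good AE_space
    proof eventually_elim
      case (elim \<omega>)
      then show ?case using b1[of \<omega>] b2[of \<omega>] \<eta> by (cases "\<omega> \<in> Bad") auto
    qed
  qed
  also have "\<dots> = (\<integral>\<omega>. \<eta> \<partial>M) + (\<integral>\<omega>. 2 * R * indicator Bad \<omega> \<partial>M)"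
    by (rule Bochner_Integration.integral_add) (use Bad in \<open>auto simp: less_top[symmetric]\<close>)
  also have "\<dots> = \<eta> + 2 * R * measure M Bad" using Bad by (simp add: P.prob_space)
  finally show ?thesis .
qed


abbreviation V where "V t x \<phi> \<equiv> value_fn M F A g Xs t x \<phi>"
abbreviation Ephi where "Ephi \<phi> \<alpha> x t \<equiv> (\<integral>\<omega>. \<phi> (Xs \<alpha> x t \<omega>) \<partial>M)"

definition good :: "(real^'d \<Rightarrow> real) \<Rightarrow> real \<Rightarrow> bool" where
  "good \<phi> R \<longleftrightarrow> continuous_on UNIV \<phi> \<and> (\<forall>z. \<bar>\<phi> z\<bar> \<le> R)"

lemma payoff_eq: "payoff M g \<phi> (Xs \<alpha> x) \<alpha> t = ereal (Ephi \<phi> \<alpha> x t) - enn2ereal (EJ \<alpha> t)"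
  unfolding payoff_def Jint_def ..

lemma V_eq: "V t x \<phi> = (SUP \<alpha>\<in>{\<alpha>. adm \<alpha>}. ereal (Ephi \<phi> \<alpha> x t) - enn2ereal (EJ \<alpha> t))"
  unfolding value_fn_def payoff_eq ..

lemma EJ0: "EJ (\<lambda>\<omega> s. 0) t = 0"
  unfolding Jint_def using g0 by simp

lemma Ephi_meas: "good \<phi> R \<Longrightarrow> adm \<alpha> \<Longrightarrow> t \<ge> 0 \<Longrightarrow> (\<lambda>\<omega>. \<phi> (Xs \<alpha> x t \<omega>)) \<in> borel_measurable M"
  unfolding good_def using borel_measurable_continuous_onI sol_meas by (blast intro: measurable_compose)

lemma Ephi_bd:
  assumes gd: "good \<phi> R" and a: "adm \<alpha>" and t: "t \<ge> 0"
  shows "\<bar>Ephi \<phi> \<alpha> x t\<bar> \<le> R"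
proof -
  have b: "\<bar>\<phi> z\<bar> \<le> R" for z using gd unfolding good_def by simp
  have i: "integrable M (\<lambda>\<omega>. \<phi> (Xs \<alpha> x t \<omega>))"
    by (rule P.integrable_const_bound[of _ R]) (use b Ephi_meas[OF gd a t] in auto)
  have "\<bar>Ephi \<phi> \<alpha> x t\<bar> \<le> (\<integral>\<omega>. \<bar>\<phi> (Xs \<alpha> x t \<omega>)\<bar> \<partial>M)" by (rule integral_abs_bound)
  also have "\<dots> \<le> (\<integral>\<omega>. R \<partial>M)" by (rule integral_mono) (use i b in auto)
  also have "\<dots> = R" by (simp add: P.prob_space)
  finally show ?thesis .
qed

lemma good_R: "good \<phi> R \<Longrightarrow> R \<ge> 0"
  unfolding good_def by (metis abs_ge_zero order_trans)

lemma V_lower: assumes gd: "good \<phi> R" and t: "t \<ge> 0"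
  shows "ereal (Ephi \<phi> (\<lambda>\<omega> s. 0) x t) \<le> V t x \<phi>"
proof -
  have "ereal (Ephi \<phi> (\<lambda>\<omega> s. 0) x t) = ereal (Ephi \<phi> (\<lambda>\<omega> s. 0) x t) - enn2ereal (EJ (\<lambda>\<omega> s. 0) t)"
    unfolding EJ0 by (simp add: zero_ennreal.rep_eq)
  also have "\<dots> \<le> V t x \<phi>" unfolding V_eq by (rule SUP_upper) (use zero_adm in simp)
  finally show ?thesis .
qed

lemma V_le:
  assumes gd: "good \<phi> R" and t: "t \<ge> 0"
    and hyp: "\<And>\<alpha>. adm \<alpha> \<Longrightarrow> EJ \<alpha> t \<le> ennreal (2 * R + 1) \<Longrightarrow> ereal (Ephi \<phi> \<alpha> x t) - enn2ereal (EJ \<alpha> t) \<le> B"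
  shows "V t x \<phi> \<le> B"
  unfolding V_eq
proof (rule SUP_least)
  have R: "R \<ge> 0" by (rule good_R[OF gd])
  fix \<alpha> assume "\<alpha> \<in> {\<alpha>. adm \<alpha>}"
  then have a: "adm \<alpha>" by simp
  show "ereal (Ephi \<phi> \<alpha> x t) - enn2ereal (EJ \<alpha> t) \<le> B"
  proof (cases "EJ \<alpha> t \<le> ennreal (2 * R + 1)")
    case True then show ?thesis by (rule hyp[OF a])
  next
    case False
    then have "ennreal (2 * R + 1) \<le> EJ \<alpha> t" by simp
    then have j: "ereal (2 * R + 1) \<le> enn2ereal (EJ \<alpha> t)"
      using R by (metis enn2ereal_ennreal less_eq_ennreal.rep_eq add_nonneg_nonneg mult_nonneg_nonneg zero_le_one zero_le_numeral)
    have e: "ereal (Ephi \<phi> \<alpha> x t) \<le> ereal R" using Ephi_bd[OF gd a t, of x] by (simp add: abs_le_iff)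
    have "ereal (Ephi \<phi> \<alpha> x t) - enn2ereal (EJ \<alpha> t) \<le> ereal R - ereal (2 * R + 1)"
      by (rule ereal_minus_mono[OF e j])
    also have "\<dots> \<le> ereal (Ephi \<phi> (\<lambda>\<omega> s. 0) x t) - enn2ereal (EJ (\<lambda>\<omega> s. 0) t)"
      using Ephi_bd[OF gd zero_adm t, of x] unfolding EJ0 by (simp add: zero_ennreal.rep_eq abs_le_iff)
    also have "\<dots> \<le> B" by (rule hyp[OF zero_adm]) (simp add: EJ0)
    finally show ?thesis .
  qed
qed

lemma V_upper: assumes gd: "good \<phi> R" and t: "t \<ge> 0"
  shows "V t x \<phi> \<le> ereal R"
proof (rule V_le[OF gd t])
  fix \<alpha> assume a: "adm \<alpha>"
  have "ereal (Ephi \<phi> \<alpha> x t) - enn2ereal (EJ \<alpha> t) \<le> ereal (Ephi \<phi> \<alpha> x t)"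
    by (rule ereal_diff_le_self) simp
  also have "\<dots> \<le> ereal R" using Ephi_bd[OF gd a t, of x] by (simp add: abs_le_iff)
  finally show "ereal (Ephi \<phi> \<alpha> x t) - enn2ereal (EJ \<alpha> t) \<le> ereal R" .
qed

lemma V_lower2: assumes gd: "good \<phi> R" and t: "t \<ge> 0"
  shows "- ereal R \<le> V t x \<phi>"
proof -
  have "- ereal R \<le> ereal (Ephi \<phi> (\<lambda>\<omega> s. 0) x t)" using Ephi_bd[OF gd zero_adm t, of x] by (simp add: abs_le_iff)
  then show ?thesis using V_lower[OF gd t, of x] by (rule order_trans)
qed

lemma V_cmp:
  assumes g1: "good \<phi>1 R" and g2: "good \<phi>2 R'" and t: "t \<ge> 0"
    and hyp: "\<And>\<alpha>. adm \<alpha> \<Longrightarrow> EJ \<alpha> t \<le> ennreal (2 * R + 1) \<Longrightarrow> Ephi \<phi>1 \<alpha> x t \<le> Ephi \<phi>2 \<alpha> x' t + \<eta>"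
  shows "V t x \<phi>1 \<le> V t x' \<phi>2 + ereal \<eta>"
proof (rule V_le[OF g1 t])
  fix \<alpha> assume a: "adm \<alpha>" and J: "EJ \<alpha> t \<le> ennreal (2 * R + 1)"
  have R: "R \<ge> 0" by (rule good_R[OF g1])
  have fin: "EJ \<alpha> t \<noteq> \<infinity>" using J by (auto simp: top_unique)
  then obtain j where j: "EJ \<alpha> t = ennreal j" "j \<ge> 0" by (cases "EJ \<alpha> t") auto
  have "ereal (Ephi \<phi>1 \<alpha> x t) - enn2ereal (EJ \<alpha> t) = ereal (Ephi \<phi>1 \<alpha> x t - j)" using j by simp
  also have "\<dots> \<le> ereal (Ephi \<phi>2 \<alpha> x' t - j) + ereal \<eta>" using hyp[OF a J] by simp
  also have "ereal (Ephi \<phi>2 \<alpha> x' t - j) = ereal (Ephi \<phi>2 \<alpha> x' t) - enn2ereal (EJ \<alpha> t)" using j by simp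
  also have "\<dots> \<le> V t x' \<phi>2" unfolding V_eq by (rule SUP_upper) (use a in simp)
  finally show "ereal (Ephi \<phi>1 \<alpha> x t) - enn2ereal (EJ \<alpha> t) \<le> V t x' \<phi>2 + ereal \<eta>" by (simp add: add_right_mono)
qed


lemma Phi_nonneg: "t \<ge> 0 \<Longrightarrow> n \<ge> 0 \<Longrightarrow> a \<ge> 0 \<Longrightarrow> Phi t n a \<ge> 0"
  unfolding Phi_def using sigma_pos C_nonneg DW_pos by (intro add_nonneg_nonneg mult_nonneg_nonneg) auto

lemma Phi_mono: "0 \<le> t \<Longrightarrow> t \<le> T \<Longrightarrow> 0 \<le> n \<Longrightarrow> n \<le> n' \<Longrightarrow> 0 \<le> a \<Longrightarrow> a \<le> a' \<Longrightarrow> Phi t n a \<le> Phi T n' a'"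
proof -
  assume t: "0 \<le> t" and tT: "t \<le> T" and n: "0 \<le> n" and nn: "n \<le> n'" and a: "0 \<le> a" and aa: "a \<le> a'"
  have s: "0 \<le> \<sigma>" "0 \<le> C" "0 \<le> DW" using sigma_pos C_nonneg DW_pos by auto
  have sq: "sqrt t \<le> sqrt T" using tT by simp
  have h1: "\<sigma> * DW * sqrt t \<le> \<sigma> * DW * sqrt T" using s sq by (simp add: mult_left_mono)
  have h2: "C * t \<le> C * T" using s tT by (simp add: mult_left_mono)
  have h3: "C * a \<le> C * a'" using s aa by (simp add: mult_left_mono)
  have h4: "exp (C * t) \<le> exp (C * T)" using h2 by simp
  have h5: "t * (n + C * t) \<le> T * (n' + C * T)"
    by (rule mult_mono) (use tT nn h2 t n s in auto)
  have h6: "C * t * a \<le> C * T * a'"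
    by (rule mult_mono) (use h2 aa s t a tT in auto)
  have h7: "\<sigma> * (DW * sqrt t * t) \<le> \<sigma> * (DW * sqrt T * T)"
    by (intro mult_left_mono mult_mono) (use s sq tT t in auto)
  have I0: "0 \<le> t * (n + C * t) + C * t * a + \<sigma> * (DW * sqrt t * t)"
    using s t n a by simp
  have "C * exp (C * t) * (t * (n + C * t) + C * t * a + \<sigma> * (DW * sqrt t * t))
      \<le> C * exp (C * T) * (T * (n' + C * T) + C * T * a' + \<sigma> * (DW * sqrt T * T))"
    by (rule mult_mono) (use h4 s h5 h6 h7 I0 in \<open>auto intro: mult_left_mono\<close>)
  then show ?thesis unfolding Phi_def using h1 h2 h3 by linarith
qed

lemma EXdev_J:
  assumes a: "adm \<alpha>" and t: "t \<ge> 0" and y: "y > 0" and L: "L \<ge> 0" and J: "EJ \<alpha> t \<le> ennreal L"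
  shows "(\<integral>\<^sup>+\<omega>. ennreal (norm (Xs \<alpha> x t \<omega> - x)) \<partial>M) \<le> ennreal (Phi t (norm x) (L / y + t * Gc y / y))"
proof (rule EXdev[OF a t])
  show "0 \<le> L / y + t * Gc y / y" using L y t Gc_nonneg[of y] by simp
  have "EA \<alpha> t \<le> ennreal (1 / y) * EJ \<alpha> t + ennreal (t * Gc y / y)" by (rule EA_EJ[OF a t y])
  also have "\<dots> \<le> ennreal (1 / y) * ennreal L + ennreal (t * Gc y / y)" by (intro add_mono mult_left_mono J) auto
  also have "\<dots> = ennreal (L / y + t * Gc y / y)"
    using L y t Gc_nonneg[of y] by (simp add: ennreal_mult[symmetric] ennreal_plus[symmetric] del: ennreal_plus)
  finally show "EA \<alpha> t \<le> ennreal (L / y + t * Gc y / y)" .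
qed

lemma small_est:
  assumes gd: "good \<phi> R" and a: "adm \<alpha>" and t: "t \<ge> 0" and y: "y > 0" and L: "L \<ge> 0"
    and J: "EJ \<alpha> t \<le> ennreal L" and \<rho>: "\<rho> > 0" and \<eta>: "\<eta> \<ge> 0"
    and uc: "\<And>z. dist z x < \<rho> \<Longrightarrow> \<bar>\<phi> z - \<phi> x\<bar> \<le> \<eta>"
  shows "\<bar>Ephi \<phi> \<alpha> x t - \<phi> x\<bar> \<le> \<eta> + 2 * R * (Phi t (norm x) (L / y + t * Gc y / y) / \<rho>)"
proof -
  define Bad where "Bad = {\<omega>\<in>space M. \<rho> \<le> norm (Xs \<alpha> x t \<omega> - x)}"
  have Xm: "Xs \<alpha> x t \<in> borel_measurable M" by (rule sol_meas[OF a t])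
  have nm: "(\<lambda>\<omega>. norm (Xs \<alpha> x t \<omega> - x)) \<in> borel_measurable M" using Xm by measurable
  have Bm: "Bad \<in> sets M" unfolding Bad_def using nm by measurable
  have b: "\<bar>\<phi> z\<bar> \<le> R" for z using gd unfolding good_def by simp
  have ar: "0 \<le> L / y + t * Gc y / y" using L y t Gc_nonneg[of y] by simp
  have "\<bar>Ephi \<phi> \<alpha> x t - (\<integral>\<omega>. \<phi> x \<partial>M)\<bar> \<le> \<eta> + 2 * R * measure M Bad"
  proof (rule int_diff[OF Ephi_meas[OF gd a t] _ _ _ Bm _ \<eta>])
    show "AE \<omega> in M. \<omega> \<notin> Bad \<longrightarrow> \<bar>\<phi> (Xs \<alpha> x t \<omega>) - \<phi> x\<bar> \<le> \<eta>"
      using AE_space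
    proof eventually_elim
      case (elim \<omega>)
      show ?case using uc[of "Xs \<alpha> x t \<omega>"] elim by (auto simp: Bad_def dist_norm)
    qed
  qed (use b in auto)
  also have "measure M Bad \<le> Phi t (norm x) (L / y + t * Gc y / y) / \<rho>"
    unfolding Bad_def
    by (rule markov[OF nm \<rho> EXdev_J[OF a t y L J] Phi_nonneg[OF t norm_ge_zero ar]])
  finally show ?thesis using good_R[OF gd] by (simp add: P.prob_space mult_left_mono)
qed

lemma cmp_est:
  assumes g1: "good \<phi>1 R" and g2: "good \<phi>2 R" and a: "adm \<alpha>" and t: "t \<ge> 0" and y: "y > 0" and L: "L \<ge> 0"
    and J: "EJ \<alpha> t \<le> ennreal L" and K: "K > 0" and \<eta>: "\<eta> \<ge> 0"
    and uc: "\<And>z z'. norm (z - x) < K \<Longrightarrow> norm (z - z') \<le> norm (x - x') * (1 + C * t * exp (C * t)) \<Longrightarrow> \<bar>\<phi>1 z - \<phi>2 z'\<bar> \<le> \<eta>"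
  shows "\<bar>Ephi \<phi>1 \<alpha> x t - Ephi \<phi>2 \<alpha> x' t\<bar> \<le> \<eta> + 2 * R * (Phi t (norm x) (L / y + t * Gc y / y) / K)"
proof -
  define Bad where "Bad = {\<omega>\<in>space M. K \<le> norm (Xs \<alpha> x t \<omega> - x)}"
  have Xm: "Xs \<alpha> x t \<in> borel_measurable M" by (rule sol_meas[OF a t])
  have nm: "(\<lambda>\<omega>. norm (Xs \<alpha> x t \<omega> - x)) \<in> borel_measurable M" using Xm by measurable
  have Bm: "Bad \<in> sets M" unfolding Bad_def using nm by measurable
  have b1: "\<bar>\<phi>1 z\<bar> \<le> R" for z using g1 unfolding good_def by simp
  have b2: "\<bar>\<phi>2 z\<bar> \<le> R" for z using g2 unfolding good_def by simp
  have ar: "0 \<le> L / y + t * Gc y / y" using L y t Gc_nonneg[of y] by simp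
  have "\<bar>Ephi \<phi>1 \<alpha> x t - Ephi \<phi>2 \<alpha> x' t\<bar> \<le> \<eta> + 2 * R * measure M Bad"
  proof (rule int_diff[OF Ephi_meas[OF g1 a t] Ephi_meas[OF g2 a t] _ _ Bm _ \<eta>])
    show "AE \<omega> in M. \<omega> \<notin> Bad \<longrightarrow> \<bar>\<phi>1 (Xs \<alpha> x t \<omega>) - \<phi>2 (Xs \<alpha> x' t \<omega>)\<bar> \<le> \<eta>"
      using AE_space Lip[OF a t, of x x']
    proof eventually_elim
      case (elim \<omega>)
      show ?case using uc[of "Xs \<alpha> x t \<omega>" "Xs \<alpha> x' t \<omega>"] elim by (auto simp: Bad_def)
    qed
  qed (use b1 b2 in auto)
  also have "measure M Bad \<le> Phi t (norm x) (L / y + t * Gc y / y) / K"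
    unfolding Bad_def
    by (rule markov[OF nm K EXdev_J[OF a t y L J] Phi_nonneg[OF t norm_ge_zero ar]])
  finally show ?thesis using good_R[OF g1] by (simp add: mult_left_mono)
qed


abbreviation rV where "rV t x \<phi> \<equiv> real_of_ereal (V t x \<phi>)"

lemma V_real: assumes gd: "good \<phi> R" and t: "t \<ge> 0"
  shows "V t x \<phi> = ereal (rV t x \<phi>)" "\<bar>rV t x \<phi>\<bar> \<le> R"
proof -
  have u: "V t x \<phi> \<le> ereal R" by (rule V_upper[OF gd t])
  have l: "- ereal R \<le> V t x \<phi>" by (rule V_lower2[OF gd t])
  from u l show "V t x \<phi> = ereal (rV t x \<phi>)" by (cases "V t x \<phi>") auto
  from u l show "\<bar>rV t x \<phi>\<bar> \<le> R" by (cases "V t x \<phi>") auto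
qed

lemma rV_cmp:
  assumes g1: "good \<phi>1 R" and g2: "good \<phi>2 R'" and t: "t \<ge> 0"
    and hyp: "\<And>\<alpha>. adm \<alpha> \<Longrightarrow> EJ \<alpha> t \<le> ennreal (2 * R + 1) \<Longrightarrow> Ephi \<phi>1 \<alpha> x t \<le> Ephi \<phi>2 \<alpha> x' t + \<eta>"
  shows "rV t x \<phi>1 \<le> rV t x' \<phi>2 + \<eta>"
  using V_cmp[OF g1 g2 t hyp] V_real(1)[OF g1 t, of x] V_real(1)[OF g2 t, of x'] by (metis plus_ereal.simps(1) ereal_less_eq(3))

lemma bcont_good: "\<phi> \<in> bcontfun \<Longrightarrow> good \<phi> (sup_norm \<phi>)"
proof -
  assume "\<phi> \<in> bcontfun"
  then have c: "continuous_on UNIV \<phi>" and bd: "bounded (range \<phi>)" unfolding bcontfun_def by auto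
  from bd obtain B where B: "\<And>z. norm (\<phi> z) \<le> B" unfolding bounded_pos by auto
  have "\<bar>\<phi> z\<bar> \<le> sup_norm \<phi>" for z
    unfolding sup_norm_def by (rule cSUP_upper) (use B in \<open>auto intro!: bdd_aboveI2\<close>)
  with c show ?thesis unfolding good_def by auto
qed

lemma good_mono: "good \<phi> R \<Longrightarrow> R \<le> R' \<Longrightarrow> good \<phi> R'"
  unfolding good_def by (auto intro: order_trans)

lemma conj3:
  assumes R: "R \<ge> 0" and T: "T \<ge> 0" and c: "c \<ge> 0" and \<epsilon>: "\<epsilon> > 0"
  shows "\<exists>r>0. \<forall>\<phi>1\<in>bcontfun. \<forall>\<phi>2\<in>bcontfun.
             sup_norm \<phi>1 \<le> R \<longrightarrow> sup_norm \<phi>2 \<le> R \<longrightarrow>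
             (SUP y\<in>cball 0 r. \<bar>\<phi>1 y - \<phi>2 y\<bar>) < \<epsilon> / 3 \<longrightarrow>
             (SUP t\<in>{0..T}. SUP x\<in>cball 0 c. \<bar>rV t x \<phi>1 - rV t x \<phi>2\<bar>) < \<epsilon>"
proof -
  define L where "L = 2 * R + 1"
  define Bd where "Bd = Phi T c (L / 1 + T * Gc 1 / 1)"
  have L0: "L \<ge> 0" unfolding L_def using R by simp
  have G1: "Gc 1 \<ge> 0" by (rule Gc_nonneg) simp
  have Bd0: "Bd \<ge> 0" unfolding Bd_def by (rule Phi_nonneg) (use T c L0 G1 in auto)
  define K where "K = 12 * R * Bd / \<epsilon> + 1"
  have K0: "K > 0" unfolding K_def using R Bd0 \<epsilon> by (intro add_nonneg_pos divide_nonneg_pos mult_nonneg_nonneg) auto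
  have key: "2 * R * (Bd / K) \<le> \<epsilon> / 6"
  proof -
    have "12 * R * Bd \<le> \<epsilon> * K" unfolding K_def using \<epsilon> by (simp add: field_simps)
    then show ?thesis using K0 by (simp add: field_simps)
  qed
  define r where "r = c + K"
  have r0: "r > 0" unfolding r_def using c K0 by simp
  show ?thesis
  proof (intro exI[of _ r] conjI r0 ballI impI)
    fix \<phi>1 \<phi>2 :: "real^'d \<Rightarrow> real" assume p1: "\<phi>1 \<in> bcontfun" and p2: "\<phi>2 \<in> bcontfun"
      and n1: "sup_norm \<phi>1 \<le> R" and n2: "sup_norm \<phi>2 \<le> R"
      and Sl: "(SUP y\<in>cball 0 r. \<bar>\<phi>1 y - \<phi>2 y\<bar>) < \<epsilon> / 3"
    define S where "S = (SUP y\<in>cball 0 r. \<bar>\<phi>1 y - \<phi>2 y\<bar>)"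
    have g1: "good \<phi>1 R" by (rule good_mono[OF bcont_good[OF p1] n1])
    have g2: "good \<phi>2 R" by (rule good_mono[OF bcont_good[OF p2] n2])
    have b1: "\<bar>\<phi>1 z\<bar> \<le> R" for z using g1 unfolding good_def by simp
    have b2: "\<bar>\<phi>2 z\<bar> \<le> R" for z using g2 unfolding good_def by simp
    have hS: "\<bar>\<phi>1 z - \<phi>2 z\<bar> \<le> S" if "norm z \<le> r" for z
      unfolding S_def
    proof (rule cSUP_upper)
      show "z \<in> cball 0 r" using that by simp
      show "bdd_above ((\<lambda>y. \<bar>\<phi>1 y - \<phi>2 y\<bar>) ` cball 0 r)"
      proof (rule bdd_aboveI2[of _ _ "2 * R"])
        fix y show "\<bar>\<phi>1 y - \<phi>2 y\<bar> \<le> 2 * R" using b1[of y] b2[of y] by linarith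
      qed
    qed
    have S0: "S \<ge> 0"
    proof -
      have "\<bar>\<phi>1 0 - \<phi>2 0\<bar> \<le> S" using hS[of 0] r0 by simp
      then show ?thesis by linarith
    qed
    have bnd: "\<bar>rV t x \<phi>1 - rV t x \<phi>2\<bar> \<le> S + \<epsilon> / 6" if t: "t \<in> {0..T}" and x: "x \<in> cball 0 c" for t x
    proof -
      have t0: "t \<ge> 0" and tT: "t \<le> T" using t by auto
      have nx: "norm x \<le> c" using x by simp
      have est: "\<bar>Ephi \<phi>a \<alpha> x t - Ephi \<phi>b \<alpha> x t\<bar> \<le> S + \<epsilon> / 6"
        if a: "adm \<alpha>" and J: "EJ \<alpha> t \<le> ennreal (2 * R + 1)"
          and ga: "good \<phi>a R" and gb: "good \<phi>b R"
          and hab: "\<And>z. norm z \<le> r \<Longrightarrow> \<bar>\<phi>a z - \<phi>b z\<bar> \<le> S" for \<alpha> \<phi>a \<phi>b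
      proof -
        have "\<bar>Ephi \<phi>a \<alpha> x t - Ephi \<phi>b \<alpha> x t\<bar> \<le> S + 2 * R * (Phi t (norm x) (L / 1 + t * Gc 1 / 1) / K)"
        proof (rule cmp_est[OF ga gb a t0 _ L0 _ K0 S0])
          show "EJ \<alpha> t \<le> ennreal L" using J unfolding L_def .
          fix z z' assume z: "norm (z - x) < K" and zz: "norm (z - z') \<le> norm (x - x) * (1 + C * t * exp (C * t))"
          then have "z' = z" by simp
          moreover have "norm z \<le> r"
            using norm_triangle_ineq[of "z - x" x] z nx unfolding r_def by simp
          ultimately show "\<bar>\<phi>a z - \<phi>b z'\<bar> \<le> S" using hab by simp
        qed simp
        also have "Phi t (norm x) (L / 1 + t * Gc 1 / 1) \<le> Bd"
          unfolding Bd_def by (rule Phi_mono) (use t0 tT nx L0 G1 T in \<open>auto intro: mult_right_mono\<close>)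
        then have "2 * R * (Phi t (norm x) (L / 1 + t * Gc 1 / 1) / K) \<le> 2 * R * (Bd / K)"
          using R K0 by (intro mult_left_mono divide_right_mono) auto
        finally show ?thesis using key by linarith
      qed
      have "rV t x \<phi>1 \<le> rV t x \<phi>2 + (S + \<epsilon> / 6)"
      proof (rule rV_cmp[OF g1 g2 t0])
        fix \<alpha> assume a: "adm \<alpha>" and J: "EJ \<alpha> t \<le> ennreal (2 * R + 1)"
        from est[OF a J g1 g2 hS] show "Ephi \<phi>1 \<alpha> x t \<le> Ephi \<phi>2 \<alpha> x t + (S + \<epsilon> / 6)" by linarith
      qed
      moreover have "rV t x \<phi>2 \<le> rV t x \<phi>1 + (S + \<epsilon> / 6)"
      proof (rule rV_cmp[OF g2 g1 t0])
        fix \<alpha> assume a: "adm \<alpha>" and J: "EJ \<alpha> t \<le> ennreal (2 * R + 1)"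
        have h: "\<bar>\<phi>2 z - \<phi>1 z\<bar> \<le> S" if "norm z \<le> r" for z using hS[OF that] by (simp add: abs_minus_commute)
        from est[OF a J g2 g1 h] show "Ephi \<phi>2 \<alpha> x t \<le> Ephi \<phi>1 \<alpha> x t + (S + \<epsilon> / 6)" by linarith
      qed
      ultimately show ?thesis by (simp add: abs_le_iff)
    qed
    have "(SUP t\<in>{0..T}. SUP x\<in>cball 0 c. \<bar>rV t x \<phi>1 - rV t x \<phi>2\<bar>) \<le> S + \<epsilon> / 6"
    proof (rule cSUP_least)
      show "{0..T} \<noteq> {}" using T by simp
      fix t assume t: "t \<in> {0..T}"
      show "(SUP x\<in>cball 0 c. \<bar>rV t x \<phi>1 - rV t x \<phi>2\<bar>) \<le> S + \<epsilon> / 6"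
        by (rule cSUP_least) (use c bnd[OF t] in auto)
    qed
    also have "S + \<epsilon> / 6 < \<epsilon>" using Sl \<epsilon> unfolding S_def by simp
    finally show "(SUP t\<in>{0..T}. SUP x\<in>cball 0 c. \<bar>rV t x \<phi>1 - rV t x \<phi>2\<bar>) < \<epsilon>" .
  qed
qed


lemma unif_cont_ball:
  fixes \<phi> :: "real^'d \<Rightarrow> real"
  assumes c: "continuous_on UNIV \<phi>" and e: "e > 0"
  shows "\<exists>d>0. \<forall>z z'. norm z \<le> B \<longrightarrow> norm z' \<le> B \<longrightarrow> dist z' z < d \<longrightarrow> \<bar>\<phi> z' - \<phi> z\<bar> < e"
proof -
  have "uniformly_continuous_on (cball 0 B) \<phi>"
    by (rule compact_uniformly_continuous[OF continuous_on_subset[OF c]]) auto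
  then obtain d where d: "d > 0" "\<And>z z'. z \<in> cball 0 B \<Longrightarrow> z' \<in> cball 0 B \<Longrightarrow> dist z' z < d \<Longrightarrow> dist (\<phi> z') (\<phi> z) < e"
    unfolding uniformly_continuous_on_def using e by metis
  then show ?thesis by (intro exI[of _ d]) (auto simp: dist_real_def)
qed

lemma conj1:
  fixes \<phi> :: "real^'d \<Rightarrow> real"
  assumes p: "\<phi> \<in> bcontfun" and t: "t \<ge> 0"
  shows "(\<lambda>x. rV t x \<phi>) \<in> bcontfun \<and> (\<forall>x. \<bar>V t x \<phi>\<bar> \<le> ereal (sup_norm \<phi>))"
proof -
  define R where "R = sup_norm \<phi>"
  have gd: "good \<phi> R" unfolding R_def by (rule bcont_good[OF p])
  have R0: "R \<ge> 0" by (rule good_R[OF gd])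
  have cphi: "continuous_on UNIV \<phi>" using gd unfolding good_def by simp
  have absV: "\<bar>V t x \<phi>\<bar> \<le> ereal R" for x
    using V_real[OF gd t, of x] by (metis abs_ereal.simps(1) ereal_less_eq(3))
  have cont: "continuous_on UNIV (\<lambda>x. rV t x \<phi>)"
    unfolding continuous_on_iff
  proof (intro ballI allI impI)
    fix x0 :: "real^'d" and e :: real assume e: "e > 0"
    define L where "L = 2 * R + 1"
    define c where "c = norm x0 + 1"
    define Bd where "Bd = Phi t c (L / 1 + t * Gc 1 / 1)"
    have L0: "L \<ge> 0" unfolding L_def using R0 by simp
    have G1: "Gc 1 \<ge> 0" by (rule Gc_nonneg) simp
    have c0: "c \<ge> 0" unfolding c_def by simp
    have Bd0: "Bd \<ge> 0" unfolding Bd_def by (rule Phi_nonneg) (use t c0 L0 G1 in auto)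
    define K where "K = 8 * R * Bd / e + 1"
    have K0: "K > 0" unfolding K_def using R0 Bd0 e by (intro add_nonneg_pos divide_nonneg_pos mult_nonneg_nonneg) auto
    have key: "2 * R * (Bd / K) \<le> e / 4"
    proof -
      have "8 * R * Bd \<le> e * K" unfolding K_def using e by (simp add: field_simps)
      then show ?thesis using K0 by (simp add: field_simps)
    qed
    obtain d0 where d0: "d0 > 0" and d0u: "\<And>z z'. norm z \<le> c + K + 1 \<Longrightarrow> norm z' \<le> c + K + 1 \<Longrightarrow> dist z' z < d0 \<Longrightarrow> \<bar>\<phi> z' - \<phi> z\<bar> < e / 4"
      using unif_cont_ball[OF cphi, of "e / 4" "c + K + 1"] e by auto
    define \<rho> where "\<rho> = min d0 1"
    have \<rho>0: "\<rho> > 0" unfolding \<rho>_def using d0 by simp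
    define \<Lambda> where "\<Lambda> = 1 + C * t * exp (C * t)"
    have \<Lambda>1: "\<Lambda> \<ge> 1" unfolding \<Lambda>_def using C_nonneg t by simp
    define \<delta> where "\<delta> = min 1 (\<rho> / (2 * \<Lambda>))"
    have \<delta>0: "\<delta> > 0" unfolding \<delta>_def using \<rho>0 \<Lambda>1 by simp
    have est: "rV t xa \<phi> \<le> rV t xb \<phi> + e / 2" if xa: "norm xa \<le> c" and xab: "norm (xa - xb) < \<delta>" for xa xb
    proof (rule rV_cmp[OF gd gd t])
      fix \<alpha> assume a: "adm \<alpha>" and J: "EJ \<alpha> t \<le> ennreal (2 * R + 1)"
      have e4: "0 \<le> e / 4" using e by simp
      show "Ephi \<phi> \<alpha> xa t \<le> Ephi \<phi> \<alpha> xb t + e / 2"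
      proof -
      have "\<bar>Ephi \<phi> \<alpha> xa t - Ephi \<phi> \<alpha> xb t\<bar> \<le> e / 4 + 2 * R * (Phi t (norm xa) (L / 1 + t * Gc 1 / 1) / K)"
      proof (rule cmp_est[OF gd gd a t _ L0 _ K0 e4])
        show "EJ \<alpha> t \<le> ennreal L" using J unfolding L_def .
        fix z z' assume z: "norm (z - xa) < K" and zz: "norm (z - z') \<le> norm (xa - xb) * (1 + C * t * exp (C * t))"
        have "norm (xa - xb) * \<Lambda> \<le> \<delta> * \<Lambda>" using xab \<Lambda>1 by (intro mult_right_mono) auto
        also have "\<delta> * \<Lambda> \<le> \<rho> / (2 * \<Lambda>) * \<Lambda>" using \<Lambda>1 unfolding \<delta>_def by (intro mult_right_mono) auto
        also have "\<dots> = \<rho> / 2" using \<Lambda>1 by simp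
        finally have zz': "norm (z - z') < \<rho>" using zz \<rho>0 unfolding \<Lambda>_def by simp
        have nz: "norm z \<le> c + K" using norm_triangle_ineq[of "z - xa" xa] z xa by simp
        have nz': "norm z' \<le> c + K + 1"
        proof -
          have "norm z' \<le> norm z + norm (z - z')" using norm_triangle_ineq[of z "z' - z"] by (simp add: norm_minus_commute)
          then show ?thesis using nz zz' unfolding \<rho>_def by simp
        qed
        have "dist z' z < d0" using zz' unfolding \<rho>_def by (simp add: dist_norm norm_minus_commute)
        moreover have "norm z \<le> c + K + 1" using nz by simp
        ultimately have "\<bar>\<phi> z' - \<phi> z\<bar> < e / 4" using d0u nz' by blast
        then show "\<bar>\<phi> z - \<phi> z'\<bar> \<le> e / 4" by (simp add: abs_minus_commute)
      qed simp
      also have "Phi t (norm xa) (L / 1 + t * Gc 1 / 1) \<le> Bd"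
        unfolding Bd_def by (rule Phi_mono) (use t xa L0 G1 in auto)
      then have "2 * R * (Phi t (norm xa) (L / 1 + t * Gc 1 / 1) / K) \<le> 2 * R * (Bd / K)"
        using R0 K0 by (intro mult_left_mono divide_right_mono) auto
      finally show "Ephi \<phi> \<alpha> xa t \<le> Ephi \<phi> \<alpha> xb t + e / 2" using key by linarith
      qed
    qed
    show "\<exists>d>0. \<forall>x'\<in>UNIV. dist x' x0 < d \<longrightarrow> dist (rV t x' \<phi>) (rV t x0 \<phi>) < e"
    proof (intro exI[of _ \<delta>] conjI \<delta>0 ballI impI)
      fix x' assume "dist x' x0 < \<delta>"
      then have d: "norm (x' - x0) < \<delta>" by (simp add: dist_norm)
      then have d': "norm (x0 - x') < \<delta>" by (simp add: norm_minus_commute)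
      have n0: "norm x0 \<le> c" unfolding c_def by simp
      have n1: "norm x' \<le> c"
      proof -
        have "norm x' \<le> norm x0 + norm (x' - x0)" using norm_triangle_ineq[of x0 "x' - x0"] by simp
        then show ?thesis using d unfolding c_def \<delta>_def by simp
      qed
      have "rV t x0 \<phi> \<le> rV t x' \<phi> + e / 2" by (rule est[OF n0 d'])
      moreover have "rV t x' \<phi> \<le> rV t x0 \<phi> + e / 2" by (rule est[OF n1 d])
      ultimately show "dist (rV t x' \<phi>) (rV t x0 \<phi>) < e" using e by (simp add: dist_real_def abs_less_iff)
    qed
  qed
  have bd: "bounded (range (\<lambda>x. rV t x \<phi>))"
    unfolding bounded_iff using V_real(2)[OF gd t] by (intro exI[of _ R]) auto
  show ?thesis using cont bd absV unfolding bcontfun_def R_def by auto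
qed


lemma conj2:
  fixes \<phi> :: "real^'d \<Rightarrow> real"
  assumes p: "\<phi> \<in> bcontfun" and cK: "compact K"
  shows "uniform_limit K (\<lambda>t x. rV t x \<phi>) \<phi> (at_right 0)"
  unfolding uniform_limit_iff
proof (intro allI impI)
  fix e :: real assume e: "e > 0"
  define R where "R = sup_norm \<phi>"
  have gd: "good \<phi> R" unfolding R_def by (rule bcont_good[OF p])
  have R0: "R \<ge> 0" by (rule good_R[OF gd])
  have cphi: "continuous_on UNIV \<phi>" using gd unfolding good_def by simp
  have "bounded K" using cK by (rule compact_imp_bounded)
  then obtain c where c: "c > 0" and cx: "\<And>x. x \<in> K \<Longrightarrow> norm x \<le> c" unfolding bounded_pos by auto
  obtain d0 where d0: "d0 > 0" and d0u: "\<And>z z'. norm z \<le> c + 1 \<Longrightarrow> norm z' \<le> c + 1 \<Longrightarrow> dist z' z < d0 \<Longrightarrow> \<bar>\<phi> z' - \<phi> z\<bar> < e / 4"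
    using unif_cont_ball[OF cphi, of "e / 4" "c + 1"] e by auto
  define \<rho> where "\<rho> = min d0 1"
  have \<rho>0: "\<rho> > 0" unfolding \<rho>_def using d0 by simp
  have e4: "0 \<le> e / 4" using e by simp
  have uc: "\<bar>\<phi> z - \<phi> x\<bar> \<le> e / 4" if x: "x \<in> K" and z: "dist z x < \<rho>" for x z
  proof -
    have nx: "norm x \<le> c + 1" using cx[OF x] by simp
    have "norm z \<le> norm x + dist z x" using norm_triangle_ineq[of x "z - x"] by (simp add: dist_norm)
    then have nz: "norm z \<le> c + 1" using cx[OF x] z unfolding \<rho>_def by simp
    have "dist z x < d0" using z unfolding \<rho>_def by simp
    then show ?thesis using d0u[OF nx nz] by simp
  qed
  define L where "L = 2 * R + 1"
  have L0: "L \<ge> 0" unfolding L_def using R0 by simp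
  define \<theta> where "\<theta> = e * \<rho> / (8 * R + 1)"
  have \<theta>0: "\<theta> > 0" unfolding \<theta>_def using e \<rho>0 R0 by simp
  have key: "2 * R * (\<theta> / \<rho>) \<le> e / 4"
  proof -
    have q: "\<theta> / \<rho> = e / (8 * R + 1)" unfolding \<theta>_def using \<rho>0 by simp
    have "2 * R * (\<theta> / \<rho>) = 2 * R * e / (8 * R + 1)" unfolding q by simp
    also have "\<dots> \<le> e / 4" using R0 e by (simp add: field_simps)
    finally show ?thesis .
  qed
  define y where "y = 2 * C * L / \<theta> + 1"
  have y0: "y > 0" unfolding y_def using C_nonneg L0 \<theta>0 by (intro add_nonneg_pos divide_nonneg_pos mult_nonneg_nonneg) auto
  have CLy: "C * (L / y) < \<theta>"
  proof -
    have "C * L \<le> \<theta> / 2 * y" unfolding y_def using \<theta>0 by (simp add: field_simps)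
    then have h: "C * L / y \<le> \<theta> / 2" using y0 by (simp add: pos_divide_le_eq mult.commute)
    have "C * (L / y) = C * L / y" by simp
    then show ?thesis using h \<theta>0 by linarith
  qed
  define f where "f t = Phi t c (L / y + t * Gc y / y)" for t
  have lim: "(f \<longlongrightarrow> f 0) (at_right 0)"
    unfolding f_def Phi_def using y0 by (intro tendsto_intros) auto
  have f0: "f 0 = C * (L / y)" unfolding f_def Phi_def by simp
  have ev: "\<forall>\<^sub>F t in at_right 0. f t < \<theta>" using order_tendstoD(2)[OF lim] f0 CLy by simp
  show "\<forall>\<^sub>F t in at_right 0. \<forall>x\<in>K. dist (rV t x \<phi>) (\<phi> x) < e"
    using ev eventually_at_right_less
  proof eventually_elim
    case (elim t)
    then have ft: "f t < \<theta>" and t0: "t \<ge> 0" by auto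
    show ?case
    proof
      fix x assume x: "x \<in> K"
      have est: "\<bar>Ephi \<phi> \<alpha> x t - \<phi> x\<bar> \<le> e / 2" if a: "adm \<alpha>" and J: "EJ \<alpha> t \<le> ennreal (2 * R + 1)" for \<alpha>
      proof -
        have "\<bar>Ephi \<phi> \<alpha> x t - \<phi> x\<bar> \<le> e / 4 + 2 * R * (Phi t (norm x) (L / y + t * Gc y / y) / \<rho>)"
          by (rule small_est[OF gd a t0 y0 L0 _ \<rho>0 e4 uc[OF x]]) (use J in \<open>simp add: L_def\<close>)
        also have "Phi t (norm x) (L / y + t * Gc y / y) \<le> f t"
          unfolding f_def by (rule Phi_mono) (use t0 cx[OF x] L0 y0 Gc_nonneg[of y] in auto)
        then have "2 * R * (Phi t (norm x) (L / y + t * Gc y / y) / \<rho>) \<le> 2 * R * (\<theta> / \<rho>)"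
          using ft R0 \<rho>0 by (intro mult_left_mono divide_right_mono) auto
        finally show ?thesis using key by linarith
      qed
      have up: "V t x \<phi> \<le> ereal (\<phi> x + e / 2)"
      proof (rule V_le[OF gd t0])
        fix \<alpha> assume a: "adm \<alpha>" and J: "EJ \<alpha> t \<le> ennreal (2 * R + 1)"
        have "ereal (Ephi \<phi> \<alpha> x t) - enn2ereal (EJ \<alpha> t) \<le> ereal (Ephi \<phi> \<alpha> x t)"
          by (rule ereal_diff_le_self) simp
        also have "\<dots> \<le> ereal (\<phi> x + e / 2)"
        proof -
          have "Ephi \<phi> \<alpha> x t \<le> \<phi> x + e / 2" using est[OF a J] by linarith
          then show ?thesis by simp
        qed
        finally show "ereal (Ephi \<phi> \<alpha> x t) - enn2ereal (EJ \<alpha> t) \<le> ereal (\<phi> x + e / 2)" .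
      qed
      have lo: "ereal (\<phi> x - e / 2) \<le> V t x \<phi>"
      proof -
        have "\<phi> x - e / 2 \<le> Ephi \<phi> (\<lambda>\<omega> s. 0) x t" using est[OF zero_adm] EJ0 by (metis abs_diff_le_iff le_diff_eq add.commute zero_le diff_le_eq)
        then have "ereal (\<phi> x - e / 2) \<le> ereal (Ephi \<phi> (\<lambda>\<omega> s. 0) x t)" by simp
        also have "\<dots> \<le> V t x \<phi>" by (rule V_lower[OF gd t0])
        finally show ?thesis .
      qed
      have "\<bar>rV t x \<phi> - \<phi> x\<bar> \<le> e / 2"
      proof -
        have "ereal (rV t x \<phi>) \<le> ereal (\<phi> x + e / 2)" using up V_real(1)[OF gd t0, of x] by simp
        then have "rV t x \<phi> \<le> \<phi> x + e / 2" by (simp only: ereal_less_eq(3))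
        moreover have "ereal (\<phi> x - e / 2) \<le> ereal (rV t x \<phi>)" using lo V_real(1)[OF gd t0, of x] by simp
        then have "\<phi> x - e / 2 \<le> rV t x \<phi>" by (simp only: ereal_less_eq(3))
        ultimately show ?thesis by linarith
      qed
      then show "dist (rV t x \<phi>) (\<phi> x) < e" using e by (simp add: dist_real_def)
    qed
  qed
qed

end

theorem mainTheorem16:
  fixes M :: "'a measure" and F :: "real \<Rightarrow> 'a measure"
    and W :: "real \<Rightarrow> 'a \<Rightarrow> real^'d::finite"
    and \<sigma> :: real and A :: "(real^'m::finite) set" and C :: real
    and b :: "real^'d \<Rightarrow> real^'m \<Rightarrow> real^'d"
    and g :: "real^'m \<Rightarrow> real"
    and Xs :: "('a \<Rightarrow> real \<Rightarrow> real^'m) \<Rightarrow> real^'d \<Rightarrow> real \<Rightarrow> 'a \<Rightarrow> real^'d"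
  assumes "prob_space M" and "complete_measure M"
    and "usual_filtration M F"
    and "brownian_motion M F W"
    and "\<sigma> > 0"
    and "A \<noteq> {}" and "0 \<in> A"
    and "C \<ge> 0"
    and "(\<lambda>(x, a). b x a) \<in> borel_measurable (restrict_space borel (UNIV \<times> A))"
    and "\<And>x. b x 0 = 0"
    and "\<And>x1 x2 a. a \<in> A \<Longrightarrow> norm (b x1 a - b x2 a) \<le> C * norm (x1 - x2)"
    and "\<And>x a. a \<in> A \<Longrightarrow> norm (b x a) \<le> C * (1 + norm x + norm a)"
    and "g \<in> borel_measurable (restrict_space borel A)"
    and "\<And>a. a \<in> A \<Longrightarrow> g a \<ge> 0"
    and "g 0 = 0"
    and "\<And>y. y \<ge> 0 \<Longrightarrow> bdd_above ((\<lambda>a. norm a * y - g a) ` A)"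
    and "\<And>\<alpha> x. admissible M F A \<alpha> \<Longrightarrow> strong_solution M F W b \<sigma> \<alpha> x (Xs \<alpha> x)"
  shows
    "(\<forall>\<phi>\<in>bcontfun. \<forall>t\<ge>0.
        (\<lambda>x. real_of_ereal (value_fn M F A g Xs t x \<phi>)) \<in> bcontfun \<and>
        (\<forall>x. \<bar>value_fn M F A g Xs t x \<phi>\<bar> \<le> ereal (sup_norm \<phi>)))
     \<and> (\<forall>\<phi>\<in>bcontfun. \<forall>K. compact K \<longrightarrow>
          uniform_limit K (\<lambda>t x. real_of_ereal (value_fn M F A g Xs t x \<phi>)) \<phi> (at_right 0))
     \<and> (\<forall>R T c \<epsilon>. R \<ge> 0 \<longrightarrow> T \<ge> 0 \<longrightarrow> c \<ge> 0 \<longrightarrow> \<epsilon> > 0 \<longrightarrow>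
          (\<exists>r>0. \<forall>\<phi>1\<in>bcontfun. \<forall>\<phi>2\<in>bcontfun.
             sup_norm \<phi>1 \<le> R \<longrightarrow> sup_norm \<phi>2 \<le> R \<longrightarrow>
             (SUP y\<in>cball 0 r. \<bar>\<phi>1 y - \<phi>2 y\<bar>) < \<epsilon> / 3 \<longrightarrow>
             (SUP t\<in>{0..T}. SUP x\<in>cball 0 c.
                \<bar>real_of_ereal (value_fn M F A g Xs t x \<phi>1) - real_of_ereal (value_fn M F A g Xs t x \<phi>2)\<bar>) < \<epsilon>))"
proof -
  interpret S: setting M F W \<sigma> A C b g Xs
    by (rule setting.intro) (fact assms)+
  show ?thesis
  proof (intro conjI)
    show "\<forall>\<phi>\<in>bcontfun. \<forall>t\<ge>0.
        (\<lambda>x. real_of_ereal (value_fn M F A g Xs t x \<phi>)) \<in> bcontfun \<and>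
        (\<forall>x. \<bar>value_fn M F A g Xs t x \<phi>\<bar> \<le> ereal (sup_norm \<phi>))"
      using S.conj1 by blast
    show "\<forall>\<phi>\<in>bcontfun. \<forall>K. compact K \<longrightarrow>
          uniform_limit K (\<lambda>t x. real_of_ereal (value_fn M F A g Xs t x \<phi>)) \<phi> (at_right 0)"
      using S.conj2 by blast
    show "\<forall>R T c \<epsilon>. R \<ge> 0 \<longrightarrow> T \<ge> 0 \<longrightarrow> c \<ge> 0 \<longrightarrow> \<epsilon> > 0 \<longrightarrow>
          (\<exists>r>0. \<forall>\<phi>1\<in>bcontfun. \<forall>\<phi>2\<in>bcontfun.
             sup_norm \<phi>1 \<le> R \<longrightarrow> sup_norm \<phi>2 \<le> R \<longrightarrow>
             (SUP y\<in>cball 0 r. \<bar>\<phi>1 y - \<phi>2 y\<bar>) < \<epsilon> / 3 \<longrightarrow>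
             (SUP t\<in>{0..T}. SUP x\<in>cball 0 c.
                \<bar>real_of_ereal (value_fn M F A g Xs t x \<phi>1) - real_of_ereal (value_fn M F A g Xs t x \<phi>2)\<bar>) < \<epsilon>)"
      using S.conj3 by blast
  qed
qed

end
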